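(* Let $q\ge 2$ be a prime power, $m\ge1$, $n=q^m-1=r_1r_2$ with $r_1,r_2>1$, $\gcd(r_1,r_2)=1$, and let $a$ be the multiplicative order of $q$ modulo $r_1$. Fix a generator $\alpha$ of $\mathbb{F}_{q^m}^*$ and a group isomorphism $T:\mathbb{Z}_n\to\mathbb{Z}_{r_1}\times\mathbb{Z}_{r_2}$, and let $\Gamma=\{(i_1,i_2)\in\mathbb{Z}_{r_1}\times\mathbb{Z}_{r_2}\mid 0\le i_1<a,\ 0\le i_2<m/a\}$. Then the set $\{0\}\cup\{\alpha^i\mid i\in T^{-1}(\Gamma)\}\subseteq\mathbb{F}_{q^m}$ is an information set for $R_q(1,m)$, and the set $\{\alpha^i\mid i\in\mathbb{Z}_n,\ i\notin T^{-1}(\Gamma)\}$ is an information set for $R_q(m(q-1)-2,m)$.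
   Context: $\mathbb{F}=\mathbb{F}_q$; elements of $\mathbb{Z}_r$ are identified with integers $0,\dots,r-1$. The $q$-weight $\mathrm{wt}_q(k)$ of a natural number $k$ is the sum of its digits in base $q$. Let $G$ be the additive group of $\mathbb{F}_{q^m}$; words of length $q^m$ are vectors in $\mathbb{F}^G$, written $bX^0+\sum_{i=0}^{n-1}a_iX^{\alpha^i}$ (coordinates indexed by $0$ and by $\alpha^i$, $0\le i<n$). For $0<\rho\le m(q-1)$, the generalized Reed–Muller code $R_q(\rho,m)$ consists of the words with $b\cdot0^s+\sum_{i}a_i\alpha^{is}=0$ for every $0\le s<q^m-1$ with $\mathrm{wt}_q(s)<m(q-1)-\rho$ (with $0^0=1$). For a linear code $C$ of dimension $k$ on coordinate set $P$, an information set is $I\subseteq P$ with $|I|=k$ such that projection of $C$ onto $I$ is onto $\mathbb{F}^k$. *)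

theory Defs
  imports "HOL-Number_Theory.Number_Theory"
begin

text \<open>q-weight: the sum of the base-q digits of k (digits at positions j <= k suffice, since q^j > k for j > k when q >= 2).\<close>
definition qwt :: "nat \<Rightarrow> nat \<Rightarrow> nat" where
  "qwt q k = (\<Sum>j\<le>k. (k div q ^ j) mod q)"

definition subfield_Fq :: "nat \<Rightarrow> 'b::field set" where
  "subfield_Fq q = {x. x ^ q = x}"

definition words :: "nat \<Rightarrow> ('b::{finite,field} \<Rightarrow> 'b) set" where
  "words q = {c. \<forall>x. c x \<in> subfield_Fq q}"

text \<open>With the coordinate indexed by 0 carrying b and
  the coordinate indexed by alpha^i carrying a_i, the check sum b 0^s + sum_i a_i alpha^(i s) is the
  sum over all coordinates x of c(x) x^s (note 0^0 = 1 in Isabelle).\<close>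
definition rm_code :: "nat \<Rightarrow> nat \<Rightarrow> nat \<Rightarrow> ('b::{finite,field} \<Rightarrow> 'b) set" where
  "rm_code q m \<rho> = {c \<in> words q. \<forall>s. s < q ^ m - 1 \<and> qwt q s < m * (q - 1) - \<rho> \<longrightarrow>
      (\<Sum>x\<in>UNIV. c x * x ^ s) = 0}"

definition lin_indep_over :: "'b::field set \<Rightarrow> ('a \<Rightarrow> 'b) set \<Rightarrow> bool" where
  "lin_indep_over K S \<longleftrightarrow> (\<forall>g. (\<forall>v\<in>S. g v \<in> K) \<longrightarrow>
      (\<forall>x. (\<Sum>v\<in>S. g v * v x) = 0) \<longrightarrow> (\<forall>v\<in>S. g v = 0))"

definition code_dim :: "'b::field set \<Rightarrow> ('a \<Rightarrow> 'b) set \<Rightarrow> nat" where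
  "code_dim K C = Max {card S | S. S \<subseteq> C \<and> finite S \<and> lin_indep_over K S}"

definition info_set :: "'b::field set \<Rightarrow> ('a \<Rightarrow> 'b) set \<Rightarrow> 'a set \<Rightarrow> bool" where
  "info_set K C I \<longleftrightarrow> card I = code_dim K C \<and>
      (\<forall>f. (\<forall>x\<in>I. f x \<in> K) \<longrightarrow> (\<exists>c\<in>C. \<forall>x\<in>I. c x = f x))"

end

theory Submission
  imports Defs "HOL-Computational_Algebra.Polynomial" "HOL-Library.FuncSet"
begin


locale rmctx =
  fixes q m n p e :: nat and \<alpha> :: "'b::{finite,field}"
  assumes p_prime: "prime p" and e_pos: "e \<ge> 1" and q_def: "q = p ^ e" and m_pos: "m \<ge> 1"
    and card_F: "card (UNIV::'b set) = q ^ m" and n_def: "n = q ^ m - 1" and n_gt: "n > 1"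
    and \<alpha>_nz: "\<alpha> \<noteq> 0" and \<alpha>_gen: "\<forall>x::'b. x \<noteq> 0 \<longrightarrow> (\<exists>i. x = \<alpha> ^ i)"
begin

lemma q_ge2: "q \<ge> 2"
proof -
  have "p \<ge> 2" using p_prime prime_ge_2_nat by blast
  hence "p ^ 1 \<le> p ^ e" using e_pos by (intro power_increasing) auto
  thus ?thesis using \<open>p \<ge> 2\<close> q_def by simp
qed

lemma qm_pos: "q ^ m > 0" using q_ge2 by simp

lemma n_plus1: "n + 1 = q ^ m" using n_def qm_pos by simp

lemma of_nat_card: "of_nat (q ^ m) = (0::'b)"
proof -
  have inj: "inj (\<lambda>y::'b. 1 + y)" by (auto simp: inj_def)
  have surj: "range (\<lambda>y::'b. 1 + y) = UNIV"
    by (auto intro!: image_eqI[where x="y - 1" for y])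
  have "(\<Sum>y\<in>UNIV. y) = (\<Sum>y\<in>range (\<lambda>y::'b. 1 + y). y)" using surj by simp
  also have "\<dots> = (\<Sum>y\<in>UNIV. 1 + y)" by (subst sum.reindex[OF inj]) simp
  also have "\<dots> = of_nat (card (UNIV::'b set)) + (\<Sum>y\<in>UNIV. y)"
    by (simp add: sum.distrib)
  finally show ?thesis using card_F by simp
qed

lemma of_nat_p: "of_nat p = (0::'b)"
proof -
  have "(of_nat p :: 'b) ^ (e * m) = of_nat (q ^ m)"
    by (simp add: q_def power_mult of_nat_power)
  hence "(of_nat p :: 'b) ^ (e * m) = 0" using of_nat_card by simp
  thus ?thesis by simp
qed

lemma CHAR_eq: "CHAR('b) = p"
proof -
  have "CHAR('b) dvd p" using of_nat_p of_nat_eq_0_iff_char_dvd by blast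
  moreover have "CHAR('b) \<noteq> 1" by simp
  ultimately show ?thesis using p_prime prime_nat_iff by blast
qed

lemma frob_pow: "q ^ k = CHAR('b) ^ (e * k)"
  by (simp add: CHAR_eq q_def power_mult)

lemma frob_add: "((x::'b) + y) ^ (q ^ k) = x ^ (q ^ k) + y ^ (q ^ k)"
  using freshmans_dream'[OF _ frob_pow] CHAR_eq p_prime by simp

lemma frob_sum: "(sum (f::_ \<Rightarrow> 'b) A) ^ (q ^ k) = (\<Sum>i\<in>A. f i ^ (q ^ k))"
  using freshmans_dream_sum'[OF _ frob_pow] CHAR_eq p_prime by simp

lemma frob_mult_sum: "(\<Sum>i\<in>A. (f i::'b) * g i) ^ (q ^ k) = (\<Sum>i\<in>A. f i ^ (q ^ k) * g i ^ (q ^ k))"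
  by (simp add: frob_sum power_mult_distrib)

lemma frob_minus: "((x::'b) - y) ^ (q ^ k) = x ^ (q ^ k) - y ^ (q ^ k)"
proof -
  have "((x - y) + y) ^ (q ^ k) = (x - y) ^ (q ^ k) + y ^ (q ^ k)" by (rule frob_add)
  thus ?thesis by (simp add: algebra_simps)
qed

lemma of_nat_n: "of_nat n = (-1::'b)"
proof -
  have "(of_nat n :: 'b) + 1 = 0" using of_nat_card n_plus1 by (metis of_nat_1 of_nat_add)
  thus ?thesis by (simp add: eq_neg_iff_add_eq_0)
qed

lemma alpha_pow_n: "\<alpha> ^ n = 1"
proof -
  let ?S = "UNIV - {0::'b}"
  have cS: "card ?S = n" using card_F n_def by (simp add: card_Diff_singleton)
  have inj: "inj_on (\<lambda>y. \<alpha> * y) ?S" using \<alpha>_nz by (auto simp: inj_on_def)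
  have img: "(\<lambda>y. \<alpha> * y) ` ?S = ?S"
  proof
    show "(\<lambda>y. \<alpha> * y) ` ?S \<subseteq> ?S" using \<alpha>_nz by auto
    show "?S \<subseteq> (\<lambda>y. \<alpha> * y) ` ?S"
    proof
      fix y assume "y \<in> ?S"
      thus "y \<in> (\<lambda>y. \<alpha> * y) ` ?S" using \<alpha>_nz
        by (intro image_eqI[where x="y / \<alpha>"]) auto
    qed
  qed
  have "prod id ?S = prod id ((\<lambda>y. \<alpha> * y) ` ?S)" using img by simp
  also have "\<dots> = prod (\<lambda>y. \<alpha> * y) ?S" by (subst prod.reindex[OF inj]) simp
  also have "\<dots> = \<alpha> ^ n * prod id ?S" using cS by (simp add: prod.distrib)
  finally have "prod id ?S * 1 = prod id ?S * \<alpha> ^ n" by (simp add: mult.commute)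
  moreover have "prod id ?S \<noteq> 0" by (simp add: prod_zero_iff)
  ultimately show ?thesis by (metis mult_left_cancel)
qed

lemma alpha_pow_mod: "\<alpha> ^ (k mod n) = \<alpha> ^ k"
proof -
  have "\<alpha> ^ k = \<alpha> ^ (n * (k div n) + k mod n)" by (metis mult_div_mod_eq)
  also have "\<dots> = (\<alpha> ^ n) ^ (k div n) * \<alpha> ^ (k mod n)" by (simp only: power_add power_mult)
  also have "\<dots> = \<alpha> ^ (k mod n)" by (simp add: alpha_pow_n)
  finally show ?thesis by simp
qed

lemma alpha_pow_eq_1: "\<alpha> ^ k = 1 \<longleftrightarrow> n dvd k"
proof
  assume "n dvd k" thus "\<alpha> ^ k = 1"
    by (metis alpha_pow_mod dvd_imp_mod_0 power_0)
next
  assume a1: "\<alpha> ^ k = 1"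
  show "n dvd k"
  proof (rule ccontr)
    assume "\<not> n dvd k"
    define d where "d = k mod n"
    have d0: "d > 0" "d < n" using \<open>\<not> n dvd k\<close> n_gt by (auto simp: d_def) (metis dvd_eq_mod_eq_0 gr0I)
    have ad: "\<alpha> ^ d = 1" using a1 alpha_pow_mod d_def by simp
    have "UNIV - {0::'b} \<subseteq> (\<lambda>i. \<alpha> ^ i) ` {..<d}"
    proof
      fix x :: 'b assume "x \<in> UNIV - {0}"
      then obtain i where "x = \<alpha> ^ i" using \<alpha>_gen by auto
      also have "\<alpha> ^ i = \<alpha> ^ (d * (i div d) + i mod d)" by (metis mult_div_mod_eq)
      also have "\<dots> = (\<alpha> ^ d) ^ (i div d) * \<alpha> ^ (i mod d)" by (simp only: power_add power_mult)
      also have "\<dots> = \<alpha> ^ (i mod d)" by (simp add: ad)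
      finally show "x \<in> (\<lambda>i. \<alpha> ^ i) ` {..<d}" using d0 by auto
    qed
    hence "card (UNIV - {0::'b}) \<le> card ((\<lambda>i. \<alpha> ^ i) ` {..<d})" by (intro card_mono) auto
    also have "\<dots> \<le> d" using card_image_le[of "{..<d}"] by simp
    finally show False using card_F n_def d0 by (simp add: card_Diff_singleton)
  qed
qed

lemma alpha_inj: "inj_on (\<lambda>k. \<alpha> ^ k) {..<n}"
proof -
  have *: "i = j" if "i < n" "j < n" "i \<le> j" "\<alpha> ^ i = \<alpha> ^ j" for i j
  proof -
    have "\<alpha> ^ i * \<alpha> ^ (j - i) = \<alpha> ^ j" using \<open>i \<le> j\<close> by (simp flip: power_add)
    hence "\<alpha> ^ i * \<alpha> ^ (j - i) = \<alpha> ^ i * 1" using that by simp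
    hence "\<alpha> ^ (j - i) = 1" using \<alpha>_nz by simp
    hence "n dvd j - i" using alpha_pow_eq_1 by simp
    moreover have "j - i < n" using that by linarith
    ultimately have "j - i = 0" using dvd_imp_le by (metis neq0_conv not_less)
    thus ?thesis using that by simp
  qed
  show ?thesis unfolding inj_on_def by (metis * lessThan_iff nat_le_linear)
qed

lemma alpha_img: "(\<lambda>k. \<alpha> ^ k) ` {..<n} = UNIV - {0}"
proof
  show "(\<lambda>k. \<alpha> ^ k) ` {..<n} \<subseteq> UNIV - {0}" using \<alpha>_nz by auto
  show "UNIV - {0} \<subseteq> (\<lambda>k. \<alpha> ^ k) ` {..<n}"
  proof
    fix x :: 'b assume "x \<in> UNIV - {0}"
    then obtain i where "x = \<alpha> ^ i" using \<alpha>_gen by auto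
    hence "x = \<alpha> ^ (i mod n)" by (simp add: alpha_pow_mod)
    thus "x \<in> (\<lambda>k. \<alpha> ^ k) ` {..<n}" using n_gt by auto
  qed
qed

lemma UNIV_eq: "(UNIV::'b set) = insert 0 ((\<lambda>k. \<alpha> ^ k) ` {..<n})"
  using alpha_img by auto

lemma pow_n_nz: "(x::'b) \<noteq> 0 \<Longrightarrow> x ^ n = 1"
proof -
  assume "x \<noteq> 0"
  then obtain i where "x = \<alpha> ^ i" using \<alpha>_gen by auto
  thus ?thesis by (simp flip: power_mult) (metis alpha_pow_eq_1 dvd_triv_left mult.commute)
qed

lemma pow_qm: "(x::'b) ^ (q ^ m) = x"
proof (cases "x = 0")
  case True thus ?thesis using qm_pos by simp
next
  case False
  have "x ^ (q ^ m) = x ^ (n + 1)" using n_plus1 by simp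
  also have "\<dots> = x" using pow_n_nz[OF False] by simp
  finally show ?thesis .
qed

end


function wd :: "nat \<Rightarrow> nat \<Rightarrow> nat" where
  "wd q k = (if k = 0 \<or> q < 2 then 0 else k mod q + wd q (k div q))"
  by auto
termination by (relation "measure snd") auto

declare wd.simps[simp del]

lemma wd_0[simp]: "wd q 0 = 0" by (subst wd.simps) simp

lemma wd_rec: "q \<ge> 2 \<Longrightarrow> wd q k = k mod q + wd q (k div q)"
  by (cases "k = 0") (simp, subst wd.simps, simp)

lemma sum_digits_wd:
  assumes "q \<ge> 2" "k < q ^ N"
  shows "(\<Sum>j<N. (k div q ^ j) mod q) = wd q k"
  using assms(2)
proof (induction N arbitrary: k)
  case 0 thus ?case by simp
next
  case (Suc N)
  have "k div q < q ^ N" using Suc.prems assms(1)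
    by (simp add: div_less_iff_less_mult mult.commute)
  have "(\<Sum>j<Suc N. (k div q ^ j) mod q) = k mod q + (\<Sum>j<N. (k div q ^ Suc j) mod q)"
    by (subst sum.lessThan_Suc_shift) simp
  also have "(\<Sum>j<N. (k div q ^ Suc j) mod q) = (\<Sum>j<N. ((k div q) div q ^ j) mod q)"
    by (simp add: div_mult2_eq)
  also have "\<dots> = wd q (k div q)" using Suc.IH[OF \<open>k div q < q ^ N\<close>] .
  finally show ?case using wd_rec[OF assms(1), of k] by simp
qed

lemma qwt_wd: assumes "q \<ge> 2" shows "qwt q k = wd q k"
proof -
  have "k < 2 ^ k" by (rule less_exp)
  also have "\<dots> \<le> q ^ k" using assms by (simp add: power_mono)
  also have "\<dots> < q ^ Suc k" using assms by simp
  finally have "k < q ^ Suc k" .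
  have "qwt q k = (\<Sum>j<Suc k. (k div q ^ j) mod q)"
    unfolding qwt_def by (simp add: lessThan_Suc_atMost)
  thus ?thesis using sum_digits_wd[OF assms \<open>k < q ^ Suc k\<close>] by simp
qed

lemma modq: "(r::nat) < q \<Longrightarrow> (r + q * t) mod q = r" by simp
lemma divq: "r < q \<Longrightarrow> (r + q * t) div q = (t::nat)" by simp

lemma wd_le: assumes "q \<ge> 2" "k < q ^ m" shows "wd q k \<le> m * (q - 1)"
  using assms(2)
proof (induction m arbitrary: k)
  case 0 thus ?case by simp
next
  case (Suc m)
  have "k div q < q ^ m" using Suc.prems assms(1)
    by (simp add: div_less_iff_less_mult mult.commute)
  have "k mod q < q" using assms(1) by simp
  hence "k mod q \<le> q - 1" by linarith
  thus ?case using Suc.IH[OF \<open>k div q < q ^ m\<close>] wd_rec[OF assms(1), of k] by simp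
qed

lemma qm1_decomp: assumes "(q::nat) \<ge> 2" shows "q ^ Suc m - 1 = (q - 1) + q * (q ^ m - 1)"
proof -
  have "q ^ m \<ge> 1" using assms by simp
  hence "q * (q ^ m - 1) = q ^ Suc m - q" by (simp add: right_diff_distrib')
  moreover have "q ^ Suc m \<ge> q" using \<open>q ^ m \<ge> 1\<close> by simp
  ultimately show ?thesis using assms by simp
qed

lemma wd_max: assumes "q \<ge> 2" shows "wd q (q ^ m - 1) = m * (q - 1)"
proof (induction m)
  case 0 thus ?case by simp
next
  case (Suc m)
  have "q - 1 < q" using assms by simp
  show ?case
    using wd_rec[OF assms, of "q ^ Suc m - 1"] qm1_decomp[OF assms, of m]
      modq[OF \<open>q - 1 < q\<close>] divq[OF \<open>q - 1 < q\<close>] Suc.IH by simp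
qed

lemma near_decomp: assumes "(q::nat) \<ge> 2" "j < m"
  shows "q ^ Suc m - 1 - q ^ Suc j = (q - 1) + q * (q ^ m - 1 - q ^ j)"
proof -
  have "q ^ j < q ^ m" using assms by (simp add: power_strict_increasing)
  hence "q * (q ^ m - 1 - q ^ j) = q ^ Suc m - q - q ^ Suc j" by (simp add: diff_mult_distrib2)
  moreover have "q ^ Suc j < q ^ Suc m" using assms by (simp add: power_strict_increasing)
  moreover have "q ^ Suc m - q ^ Suc j \<ge> q"
  proof -
    have "q ^ Suc m = q * q ^ m" "q ^ Suc j = q * q ^ j" by simp_all
    moreover have "q * q ^ m - q * q ^ j = q * (q ^ m - q ^ j)" by (simp add: diff_mult_distrib2)
    moreover have "q ^ m - q ^ j \<ge> 1" using \<open>q ^ j < q ^ m\<close> by simp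
    ultimately show ?thesis by (metis mult.right_neutral mult_le_mono2)
  qed
  ultimately show ?thesis using assms by simp
qed

lemma near0_decomp: assumes "(q::nat) \<ge> 2"
  shows "q ^ Suc m - 1 - q ^ 0 = (q - 2) + q * (q ^ m - 1)"
  using qm1_decomp[OF assms, of m] assms by simp

lemma wd_near: assumes "q \<ge> 2" "j < m" shows "wd q (q ^ m - 1 - q ^ j) + 1 = m * (q - 1)"
  using assms(2)
proof (induction m arbitrary: j)
  case 0 thus ?case by simp
next
  case (Suc m)
  have l1: "q - 1 < q" "q - 2 < q" using assms by simp_all
  show ?case
  proof (cases j)
    case 0
    have "wd q (q ^ Suc m - 1 - q ^ j) = (q - 2) + wd q (q ^ m - 1)"
      using wd_rec[OF assms(1), of "q ^ Suc m - 1 - q ^ 0"] near0_decomp[OF assms(1), of m]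
        modq[OF l1(2)] divq[OF l1(2)] 0 by simp
    hence "wd q (q ^ Suc m - 1 - q ^ j) = (q - 2) + m * (q - 1)" using wd_max[OF assms(1), of m] by simp
    moreover have "Suc m * (q - 1) = (q - 1) + m * (q - 1)" by simp
    ultimately show ?thesis using assms(1) by linarith
  next
    case (Suc j')
    hence "j' < m" using Suc.prems by simp
    have "wd q (q ^ Suc m - 1 - q ^ j) = (q - 1) + wd q (q ^ m - 1 - q ^ j')"
      using wd_rec[OF assms(1), of "q ^ Suc m - 1 - q ^ Suc j'"] near_decomp[OF assms(1) \<open>j' < m\<close>]
        modq[OF l1(1)] divq[OF l1(1)] Suc by simp
    thus ?thesis using Suc.IH[OF \<open>j' < m\<close>] by simp
  qed
qed

lemma wd_big:
  assumes "q \<ge> 2" "k < q ^ m" "m * (q - 1) < wd q k + 2"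
  shows "k = q ^ m - 1 \<or> (\<exists>j<m. k = q ^ m - 1 - q ^ j)"
  using assms(2,3)
proof (induction m arbitrary: k)
  case 0 thus ?case by simp
next
  case (Suc m)
  define k0 where "k0 = k mod q"
  define k' where "k' = k div q"
  have kk: "k = k0 + q * k'" unfolding k0_def k'_def by simp
  have "k0 < q" using assms(1) unfolding k0_def by simp
  hence k0q: "k0 \<le> q - 1" by linarith
  have k'm: "k' < q ^ m" using Suc.prems assms(1) unfolding k'_def
    by (simp add: div_less_iff_less_mult mult.commute)
  have wk: "wd q k = k0 + wd q k'" using wd_rec[OF assms(1), of k] k0_def k'_def by simp
  have "m * (q - 1) < wd q k' + 2" using Suc.prems(2) wk k0q by simp
  from Suc.IH[OF k'm this] show ?case
  proof
    assume h: "k' = q ^ m - 1"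
    hence "wd q k' = m * (q - 1)" using wd_max[OF assms(1)] by simp
    hence "k0 + 2 > q - 1" using Suc.prems(2) wk by simp
    hence "k0 = q - 1 \<or> k0 = q - 2" using k0q by linarith
    thus ?thesis
    proof
      assume "k0 = q - 1"
      hence "k = q ^ Suc m - 1" using kk h qm1_decomp[OF assms(1), of m] by simp
      thus ?thesis by simp
    next
      assume "k0 = q - 2"
      hence "k = q ^ Suc m - 1 - q ^ 0" using kk h near0_decomp[OF assms(1), of m] by simp
      thus ?thesis by blast
    qed
  next
    assume "\<exists>j<m. k' = q ^ m - 1 - q ^ j"
    then obtain j where j: "j < m" "k' = q ^ m - 1 - q ^ j" by blast
    hence "wd q k' + 1 = m * (q - 1)" using wd_near[OF assms(1)] by simp
    hence "k0 = q - 1" using Suc.prems(2) wk k0q by simp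
    hence "k = q ^ Suc m - 1 - q ^ Suc j" using kk j near_decomp[OF assms(1) j(1)] by simp
    thus ?thesis using j by blast
  qed
qed

lemma wd_zero: assumes "q \<ge> 2" "wd q k = 0" shows "k = 0"
  using assms(2)
proof (induction k rule: less_induct)
  case (less k)
  show ?case
  proof (rule ccontr)
    assume "k \<noteq> 0"
    hence "k div q < k" using assms(1) by simp
    have "k mod q = 0" "wd q (k div q) = 0" using less.prems wd_rec[OF assms(1), of k] by simp_all
    hence "k div q = 0" using less.IH[OF \<open>k div q < k\<close>] by simp
    thus False using \<open>k mod q = 0\<close> \<open>k \<noteq> 0\<close> by (metis div_mult_mod_eq mult_0 add_0)
  qed
qed

lemma wd_small:
  assumes "q \<ge> 2" "wd q k < 2"
  shows "k = 0 \<or> (\<exists>j. k = q ^ j)"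
  using assms(2)
proof (induction k rule: less_induct)
  case (less k)
  show ?case
  proof (cases "k = 0")
    case True thus ?thesis by simp
  next
    case False
    have w: "wd q k = k mod q + wd q (k div q)" using wd_rec[OF assms(1), of k] .
    have lt: "k div q < k" using False assms(1) by simp
    show ?thesis
    proof (cases "k mod q = 0")
      case True
      hence "wd q (k div q) < 2" using less.prems w by simp
      from less.IH[OF lt this] show ?thesis
      proof
        assume "k div q = 0" thus ?thesis using True by (metis div_mult_mod_eq mult_0 add_0)
      next
        assume "\<exists>j. k div q = q ^ j"
        then obtain j where "k div q = q ^ j" by blast
        hence "k = q ^ Suc j" using True by (metis add.right_neutral div_mult_mod_eq mult.commute power_Suc)
        thus ?thesis by blast
      qed
    next
      case False
      hence "k mod q = 1" "wd q (k div q) = 0" using less.prems w by simp_all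
      have "k div q = 0" using wd_zero[OF assms(1) \<open>wd q (k div q) = 0\<close>] .
      hence "k = q ^ 0" using \<open>k mod q = 1\<close> by (metis add_0 div_mult_mod_eq mult_0 power_0)
      thus ?thesis by blast
    qed
  qed
qed



context rmctx begin

abbreviation KK :: "'b set" where "KK \<equiv> subfield_Fq q"

lemma K_iff: "x \<in> KK \<longleftrightarrow> x ^ q = x" by (simp add: subfield_Fq_def)

lemma frob_add1: "((x::'b) + y) ^ q = x ^ q + y ^ q" using frob_add[of x y 1] by simp
lemma frob_minus1: "((x::'b) - y) ^ q = x ^ q - y ^ q" using frob_minus[of x y 1] by simp

lemma K_0: "0 \<in> KK" using q_ge2 by (simp add: K_iff)
lemma K_1: "1 \<in> KK" by (simp add: K_iff)
lemma K_add: "x \<in> KK \<Longrightarrow> y \<in> KK \<Longrightarrow> x + y \<in> KK" by (simp add: K_iff frob_add1)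
lemma K_diff: "x \<in> KK \<Longrightarrow> y \<in> KK \<Longrightarrow> x - y \<in> KK" by (simp add: K_iff frob_minus1)
lemma K_uminus: "x \<in> KK \<Longrightarrow> - x \<in> KK" using K_diff[OF K_0] by simp
lemma K_mult: "x \<in> KK \<Longrightarrow> y \<in> KK \<Longrightarrow> x * y \<in> KK" by (simp add: K_iff power_mult_distrib)
lemma K_divide: "x \<in> KK \<Longrightarrow> y \<in> KK \<Longrightarrow> x / y \<in> KK" by (simp add: K_iff power_divide)
lemma K_sum: "(\<And>i. i \<in> A \<Longrightarrow> f i \<in> KK) \<Longrightarrow> sum f A \<in> KK"
  by (induction A rule: infinite_finite_induct) (auto simp: K_0 K_add)
lemma K_pow: "x \<in> KK \<Longrightarrow> x ^ (q ^ j) = x"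
proof (induction j)
  case 0 thus ?case by simp
next
  case (Suc j)
  have "x ^ (q ^ Suc j) = (x ^ (q ^ j)) ^ q" by (simp only: power_Suc mult.commute[of q] power_mult)
  thus ?case using Suc K_iff by simp
qed

lemma qm1_dvd: "(q - 1) dvd n"
proof -
  have "[q = 1] (mod (q - 1))" using q_ge2 by (simp add: cong_altdef_nat)
  hence "[q ^ m = 1 ^ m] (mod (q - 1))" by (rule cong_pow)
  thus ?thesis using n_def cong_to_1_nat by simp
qed

lemma card_K: "card KK = q"
proof (rule antisym)
  define P :: "'b poly" where "P = monom 1 q - [:0, 1:]"
  have polyP: "poly P x = x ^ q - x" for x by (simp add: P_def poly_monom)
  have "coeff P q = 1" using q_ge2 by (simp add: P_def coeff_pCons split: nat.split)
  hence "P \<noteq> 0" by auto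
  have "degree P \<le> q" unfolding P_def using q_ge2
    by (intro degree_diff_le) (auto simp: degree_monom_le)
  have "KK = {x. poly P x = 0}" by (auto simp: polyP K_iff)
  thus "card KK \<le> q" using card_poly_roots_bound[OF \<open>P \<noteq> 0\<close>] \<open>degree P \<le> q\<close> by simp
next
  define N where "N = n div (q - 1)"
  have nN: "n = (q - 1) * N" using qm1_dvd N_def by simp
  have Npos: "N > 0" using nN n_gt by (cases N) auto
  let ?E = "(\<lambda>k. \<alpha> ^ (N * k)) ` {..<q - 1}"
  have sub: "insert 0 ?E \<subseteq> KK"
  proof
    fix x assume "x \<in> insert 0 ?E"
    thus "x \<in> KK"
    proof
      assume "x = 0" thus ?thesis using K_0 by simp
    next
      assume "x \<in> ?E"
      then obtain k where x: "x = \<alpha> ^ (N * k)" by auto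
      have "x ^ q = \<alpha> ^ (N * k) * \<alpha> ^ (N * k * (q - 1))"
      proof -
        have "N * k * q = N * k + N * k * (q - 1)" using q_ge2
          by (metis add.commute le_add_diff_inverse2 mult.right_neutral one_le_numeral order_trans distrib_left)
        thus ?thesis using x by (simp flip: power_mult power_add)
      qed
      also have "\<alpha> ^ (N * k * (q - 1)) = 1" using alpha_pow_eq_1 nN by simp
      finally show ?thesis using x K_iff by simp
    qed
  qed
  have inj: "inj_on (\<lambda>k. \<alpha> ^ (N * k)) {..<q - 1}"
  proof (rule inj_onI)
    fix i j assume ij: "i \<in> {..<q - 1}" "j \<in> {..<q - 1}" "\<alpha> ^ (N * i) = \<alpha> ^ (N * j)"
    have "N * i < n" "N * j < n" using ij Npos nN by auto
    hence "N * i = N * j" using inj_onD[OF alpha_inj ij(3)] by simp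
    thus "i = j" using Npos by simp
  qed
  have "0 \<notin> ?E" using \<alpha>_nz by auto
  hence "card (insert 0 ?E) = q" using card_image[OF inj] q_ge2 by simp
  thus "q \<le> card KK" using card_mono[OF finite sub] by simp
qed

lemma powsum_zero:
  assumes "s = 0 \<or> \<not> n dvd s"
  shows "(\<Sum>y\<in>UNIV. (y::'b) ^ s) = 0"
proof -
  have "(\<Sum>y\<in>UNIV. (y::'b) ^ s) = 0 ^ s + (\<Sum>y\<in>(\<lambda>k. \<alpha> ^ k) ` {..<n}. y ^ s)"
    by (subst UNIV_eq, subst sum.insert) (auto simp: \<alpha>_nz)
  also have "(\<Sum>y\<in>(\<lambda>k. \<alpha> ^ k) ` {..<n}. y ^ s) = (\<Sum>k<n. (\<alpha> ^ s) ^ k)"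
    by (subst sum.reindex[OF alpha_inj]) (simp flip: power_mult add: mult.commute)
  finally have eq: "(\<Sum>y\<in>UNIV. (y::'b) ^ s) = 0 ^ s + (\<Sum>k<n. (\<alpha> ^ s) ^ k)" .
  show ?thesis
  proof (cases "s = 0")
    case True thus ?thesis using eq of_nat_n by simp
  next
    case False
    hence nd: "\<not> n dvd s" using assms by simp
    have "\<alpha> ^ s \<noteq> 1" using alpha_pow_eq_1 nd by simp
    moreover have "(\<alpha> ^ s) ^ n = 1" by (simp flip: power_mult) (simp add: alpha_pow_eq_1)
    ultimately have "(\<Sum>k<n. (\<alpha> ^ s) ^ k) = 0" by (simp add: sum_gp_strict)
    thus ?thesis using eq False by simp
  qed
qed

end


definition subf :: "'b::field set \<Rightarrow> bool" where
  "subf K \<longleftrightarrow> 0 \<in> K \<and> 1 \<in> K \<and> (\<forall>x\<in>K. \<forall>y\<in>K. x + y \<in> K \<and> x - y \<in> K \<and> x * y \<in> K \<and> x / y \<in> K)"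

lemma subf_sum: "subf K \<Longrightarrow> (\<And>i. i \<in> A \<Longrightarrow> f i \<in> K) \<Longrightarrow> sum f A \<in> K"
  by (induction A rule: infinite_finite_induct) (auto simp: subf_def)

lemma dep_exists:
  fixes K :: "'b::field set" and v :: "'s \<Rightarrow> 'a \<Rightarrow> 'b"
  assumes sK: "subf K" and fI: "finite I"
  shows "finite S \<Longrightarrow> card I < card S \<Longrightarrow> (\<forall>s\<in>S. \<forall>y\<in>I. v s y \<in> K) \<Longrightarrow>
    \<exists>g. (\<forall>s\<in>S. g s \<in> K) \<and> (\<exists>s\<in>S. g s \<noteq> 0) \<and> (\<forall>y\<in>I. (\<Sum>s\<in>S. g s * v s y) = 0)"
  using fI
proof (induction I arbitrary: S v rule: finite_induct)
  case empty
  then obtain s0 where "s0 \<in> S" by fastforce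
  show ?case
    by (rule exI[of _ "\<lambda>s. if s = s0 then 1 else 0"])
      (use \<open>s0 \<in> S\<close> sK in \<open>auto simp: subf_def\<close>)
next
  case (insert x I)
  have vK: "\<forall>s\<in>S. \<forall>y\<in>I. v s y \<in> K" "\<forall>s\<in>S. v s x \<in> K" using insert.prems(3) by auto
  show ?case
  proof (cases "\<forall>s\<in>S. v s x = 0")
    case True
    have "card I < card S" using insert.prems(2) insert.hyps by simp
    from insert.IH[OF insert.prems(1) this vK(1)] obtain g where
      g: "\<forall>s\<in>S. g s \<in> K" "\<exists>s\<in>S. g s \<noteq> 0" "\<forall>y\<in>I. (\<Sum>s\<in>S. g s * v s y) = 0" by blast
    show ?thesis using g True by (intro exI[of _ g]) auto
  next
    case False
    then obtain w where w: "w \<in> S" "v w x \<noteq> 0" by blast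
    define S' where "S' = S - {w}"
    have fS': "finite S'" using insert.prems(1) S'_def by simp
    have cS': "card I < card S'" using insert.prems(2) insert.hyps w(1) S'_def by simp
    define v' where "v' s y = v s y - (v s x / v w x) * v w y" for s y
    have v'K: "\<forall>s\<in>S'. \<forall>y\<in>I. v' s y \<in> K"
      using vK w(1) sK unfolding v'_def S'_def subf_def by (auto)
    from insert.IH[OF fS' cS' v'K] obtain g' where
      g': "\<forall>s\<in>S'. g' s \<in> K" "\<exists>s\<in>S'. g' s \<noteq> 0" "\<forall>y\<in>I. (\<Sum>s\<in>S'. g' s * v' s y) = 0" by blast
    define c where "c = (\<Sum>s\<in>S'. g' s * v s x)"
    define g where "g s = (if s = w then - c / v w x else g' s)" for s
    have cK: "c \<in> K" unfolding c_def
      by (rule subf_sum[OF sK]) (use g' vK sK S'_def in \<open>auto simp: subf_def\<close>)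
    have gw: "g w \<in> K" using cK sK unfolding g_def subf_def
      by (metis diff_0 vK(2) w(1))
    have sumS: "(\<Sum>s\<in>S. g s * v s y) = g w * v w y + (\<Sum>s\<in>S'. g' s * v s y)" for y
    proof -
      have "(\<Sum>s\<in>S. g s * v s y) = g w * v w y + (\<Sum>s\<in>S'. g s * v s y)"
        using insert.prems(1) w(1) S'_def by (simp add: sum.remove)
      moreover have "(\<Sum>s\<in>S'. g s * v s y) = (\<Sum>s\<in>S'. g' s * v s y)"
        by (rule sum.cong) (auto simp: g_def S'_def)
      ultimately show ?thesis by simp
    qed
    show ?thesis
    proof (intro exI[of _ g] conjI ballI)
      fix s assume "s \<in> S" thus "g s \<in> K" using gw g'(1) S'_def by (cases "s = w") (auto simp: g_def)
    next
      obtain s where "s \<in> S'" "g' s \<noteq> 0" using g'(2) by blast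
      thus "\<exists>s\<in>S. g s \<noteq> 0" using S'_def by (intro bexI[of _ s]) (auto simp: g_def)
    next
      fix y assume "y \<in> insert x I"
      thus "(\<Sum>s\<in>S. g s * v s y) = 0"
      proof
        assume "y = x"
        thus ?thesis using sumS[of x] w(2) by (simp add: g_def c_def)
      next
        assume "y \<in> I"
        have "0 = (\<Sum>s\<in>S'. g' s * v' s y)" using g'(3) \<open>y \<in> I\<close> by simp
        also have "\<dots> = (\<Sum>s\<in>S'. g' s * v s y - (g' s * v s x) * (v w y / v w x))"
          by (rule sum.cong) (simp_all add: v'_def algebra_simps)
        also have "\<dots> = (\<Sum>s\<in>S'. g' s * v s y) - c * (v w y / v w x)"
          by (simp add: sum_subtractf c_def sum_distrib_right sum_divide_distrib)
        also have "c * (v w y / v w x) = c / v w x * v w y" by simp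
        finally have "(\<Sum>s\<in>S'. g' s * v s y) = c / v w x * v w y" by simp
        thus ?thesis using sumS[of y] by (simp add: g_def)
      qed
    qed
  qed
qed

lemma code_dim_eq:
  fixes C :: "('a \<Rightarrow> 'b::field) set"
  assumes sK: "subf K" and fI: "finite I"
    and clos: "\<And>S g. finite S \<Longrightarrow> S \<subseteq> C \<Longrightarrow> (\<forall>v\<in>S. g v \<in> K) \<Longrightarrow> (\<lambda>x. \<Sum>v\<in>S. g v * v x) \<in> C"
    and valsK: "\<And>c x. c \<in> C \<Longrightarrow> x \<in> I \<Longrightarrow> c x \<in> K"
    and surj: "\<And>f. (\<forall>x\<in>I. f x \<in> K) \<Longrightarrow> \<exists>c\<in>C. \<forall>x\<in>I. c x = f x"
    and inj: "\<And>c. c \<in> C \<Longrightarrow> (\<forall>x\<in>I. c x = 0) \<Longrightarrow> \<forall>x. c x = 0"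
  shows "code_dim K C = card I"
proof -
  define M where "M = {card S | S. S \<subseteq> C \<and> finite S \<and> lin_indep_over K S}"
  have upper: "card S \<le> card I" if S: "S \<subseteq> C" "finite S" "lin_indep_over K S" for S
  proof (rule ccontr)
    assume "\<not> card S \<le> card I"
    hence "card I < card S" by simp
    have "\<forall>s\<in>S. \<forall>y\<in>I. s y \<in> K" using valsK S(1) by auto
    from dep_exists[OF sK fI S(2) \<open>card I < card S\<close>, of "\<lambda>s y. s y"] this obtain g where
      g: "\<forall>s\<in>S. g s \<in> K" "\<exists>s\<in>S. g s \<noteq> 0" "\<forall>y\<in>I. (\<Sum>s\<in>S. g s * s y) = 0" by blast
    have "(\<lambda>x. \<Sum>v\<in>S. g v * v x) \<in> C" using clos S g(1) by blast
    from inj[OF this] g(3) have "\<forall>x. (\<Sum>v\<in>S. g v * v x) = 0" by blast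
    hence "\<forall>v\<in>S. g v = 0" using S(3) g(1) unfolding lin_indep_over_def by blast
    thus False using g(2) by blast
  qed
  have "\<forall>x\<in>I. \<exists>c\<in>C. \<forall>y\<in>I. c y = (if y = x then 1 else 0)"
  proof
    fix x assume "x \<in> I"
    show "\<exists>c\<in>C. \<forall>y\<in>I. c y = (if y = x then 1 else 0)"
      using surj[of "\<lambda>y. if y = x then 1 else 0"] sK by (simp add: subf_def)
  qed
  then obtain e where e: "\<And>x. x \<in> I \<Longrightarrow> e x \<in> C" "\<And>x y. x \<in> I \<Longrightarrow> y \<in> I \<Longrightarrow> e x y = (if y = x then 1 else 0)"
    by metis
  have inje: "inj_on e I"
  proof (rule inj_onI)
    fix x x' assume "x \<in> I" "x' \<in> I" "e x = e x'"
    hence "e x x = e x' x" by simp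
    thus "x = x'" using e(2) \<open>x \<in> I\<close> \<open>x' \<in> I\<close> by (simp split: if_splits)
  qed
  have indep: "lin_indep_over K (e ` I)"
    unfolding lin_indep_over_def
  proof (intro allI impI ballI)
    fix g v assume gK: "\<forall>v\<in>e ` I. g v \<in> K" and z: "\<forall>x. (\<Sum>v\<in>e ` I. g v * v x) = 0" and v: "v \<in> e ` I"
    then obtain x where x: "x \<in> I" "v = e x" by blast
    have "0 = (\<Sum>v\<in>e ` I. g v * v x)" using z by simp
    also have "\<dots> = (\<Sum>x'\<in>I. g (e x') * e x' x)" by (simp add: sum.reindex[OF inje])
    also have "\<dots> = (\<Sum>x'\<in>I. if x' = x then g (e x) else 0)"
      by (rule sum.cong) (use e(2) x(1) in auto)
    also have "\<dots> = g (e x)" using x(1) fI by simp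
    finally show "g v = 0" using x by simp
  qed
  have mem: "card I \<in> M" unfolding M_def
    using e(1) fI indep card_image[OF inje] by (intro CollectI exI[of _ "e ` I"]) auto
  have finM: "finite M"
    by (rule finite_subset[of _ "{..card I}"]) (auto simp: M_def dest: upper)
  have "Max M = card I"
    by (rule Max_eqI[OF finM]) (use mem upper M_def in auto)
  thus ?thesis unfolding code_dim_def M_def by simp
qed


context rmctx begin
lemma subf_K: "subf KK"
  unfolding subf_def by (simp add: K_0 K_1 K_add K_diff K_mult K_divide)

lemma words_iff: "c \<in> words q \<longleftrightarrow> (\<forall>x. c x \<in> KK)" by (simp add: words_def)

lemma rm_clos:
  assumes "finite S" "S \<subseteq> rm_code q m \<rho>" "\<forall>v\<in>S. g v \<in> KK"
  shows "(\<lambda>x. \<Sum>v\<in>S. g v * v x) \<in> rm_code q m \<rho>"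
proof -
  have w: "\<forall>v\<in>S. \<forall>x. v x \<in> KK" using assms(2) by (auto simp: rm_code_def words_iff)
  have "(\<lambda>x. \<Sum>v\<in>S. g v * v x) \<in> words q"
    unfolding words_iff using w assms(3) by (auto intro!: K_sum K_mult)
  moreover have "(\<Sum>x\<in>UNIV. (\<Sum>v\<in>S. g v * v x) * x ^ s) = 0"
    if "s < q ^ m - 1 \<and> qwt q s < m * (q - 1) - \<rho>" for s
  proof -
    have "(\<Sum>x\<in>UNIV. (\<Sum>v\<in>S. g v * v x) * x ^ s) = (\<Sum>v\<in>S. g v * (\<Sum>x\<in>UNIV. v x * x ^ s))"
      by (simp add: sum_distrib_right sum_distrib_left mult.assoc) (rule sum.swap)
    also have "\<dots> = 0" using assms(2) that by (auto simp: rm_code_def intro!: sum.neutral)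
    finally show ?thesis .
  qed
  ultimately show ?thesis by (simp add: rm_code_def)
qed

lemma mq_ge2: "m * (q - 1) \<ge> 2"
proof (rule ccontr)
  assume "\<not> m * (q - 1) \<ge> 2"
  moreover have "m * (q - 1) \<ge> m * 1" using q_ge2 by (intro mult_le_mono2) simp
  ultimately have "m = 1" using m_pos by linarith
  hence "q = 2" using \<open>\<not> m * (q - 1) \<ge> 2\<close> q_ge2 by simp
  thus False using n_def n_gt \<open>m = 1\<close> by simp
qed

end

context rmctx begin
lemma C2_iff:
  fixes c :: "'b \<Rightarrow> 'b" shows
  "c \<in> rm_code q m (m * (q - 1) - 2) \<longleftrightarrow>
     c \<in> words q \<and> (\<Sum>x\<in>UNIV. c x) = 0 \<and> (\<Sum>x\<in>UNIV. c x * x) = 0"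
proof -
  have e: "m * (q - 1) - (m * (q - 1) - 2) = 2" using mq_ge2 by simp
  have qwt0: "qwt q 0 = 0" and qwt1: "qwt q 1 = 1"
    using q_ge2 wd_rec[OF q_ge2, of 1] by (simp_all add: qwt_wd)
  show ?thesis
  proof
    assume c: "c \<in> rm_code q m (m * (q - 1) - 2)"
    have H: "\<forall>s. s < q ^ m - 1 \<and> qwt q s < 2 \<longrightarrow> (\<Sum>x\<in>UNIV. c x * x ^ s) = 0"
      using c unfolding rm_code_def e by simp
    have "(\<Sum>x\<in>UNIV. c x * x ^ 0) = 0" using H[rule_format, of 0] n_def n_gt qwt0 by simp
    moreover have "(\<Sum>x\<in>UNIV. c x * x ^ 1) = 0" using H[rule_format, of 1] n_def n_gt qwt1 by simp
    ultimately have "(\<Sum>x\<in>UNIV. c x * x ^ 0) = 0" "(\<Sum>x\<in>UNIV. c x * x ^ 1) = 0" by blast+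
    thus "c \<in> words q \<and> (\<Sum>x\<in>UNIV. c x) = 0 \<and> (\<Sum>x\<in>UNIV. c x * x) = 0"
      using c by (simp add: rm_code_def)
  next
    assume c: "c \<in> words q \<and> (\<Sum>x\<in>UNIV. c x) = 0 \<and> (\<Sum>x\<in>UNIV. c x * x) = 0"
    have "(\<Sum>x\<in>UNIV. c x * x ^ s) = 0" if "qwt q s < 2" for s
    proof -
      have "s = 0 \<or> (\<exists>j. s = q ^ j)" using wd_small[OF q_ge2] that qwt_wd[OF q_ge2] by simp
      thus ?thesis
      proof
        assume "s = 0" thus ?thesis using c by simp
      next
        assume "\<exists>j. s = q ^ j"
        then obtain j where s: "s = q ^ j" by blast
        have "(\<Sum>x\<in>UNIV. c x * x ^ s) = (\<Sum>x\<in>UNIV. (c x * x) ^ (q ^ j))"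
        proof -
          have cK: "\<And>x. c x \<in> KK" using c words_iff by blast
          show ?thesis by (simp add: s power_mult_distrib K_pow[OF cK])
        qed
        also have "\<dots> = (\<Sum>x\<in>UNIV. c x * x) ^ (q ^ j)" by (simp add: frob_sum)
        finally show ?thesis using c q_ge2 by simp
      qed
    qed
    thus "c \<in> rm_code q m (m * (q - 1) - 2)" using c unfolding rm_code_def e by auto
  qed
qed

end

context rmctx begin
lemma qj_le_n: "j < m \<Longrightarrow> q ^ j \<le> n"
proof -
  assume "j < m"
  hence "q ^ j < q ^ m" using q_ge2 by (simp add: power_strict_increasing)
  thus ?thesis using n_def by simp
qed

lemma tr_in_C1:
  fixes \<delta> :: 'b
  assumes k0: "k0 \<in> KK"
  shows "(\<lambda>y. k0 + (\<Sum>j<m. (\<delta> * y) ^ (q ^ j))) \<in> rm_code q m 1"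
proof -
  have shift: "(\<Sum>j<m. z ^ (q ^ Suc j)) = (\<Sum>j<m. z ^ (q ^ j))" for z :: 'b
  proof -
    have "(\<Sum>j<Suc m. z ^ (q ^ j)) = z ^ (q ^ 0) + (\<Sum>j<m. z ^ (q ^ Suc j))"
      by (rule sum.lessThan_Suc_shift)
    moreover have "(\<Sum>j<Suc m. z ^ (q ^ j)) = (\<Sum>j<m. z ^ (q ^ j)) + z ^ (q ^ m)" by simp
    ultimately show ?thesis using pow_qm by simp
  qed
  have "(\<lambda>y. k0 + (\<Sum>j<m. (\<delta> * y) ^ (q ^ j))) \<in> words q"
    unfolding words_iff K_iff
  proof
    fix y
    have "(k0 + (\<Sum>j<m. (\<delta> * y) ^ (q ^ j))) ^ q = k0 ^ q + (\<Sum>j<m. ((\<delta> * y) ^ (q ^ j)) ^ q)"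
      using frob_add1 frob_sum[of _ _ 1] by simp
    also have "\<dots> = k0 + (\<Sum>j<m. (\<delta> * y) ^ (q ^ Suc j))"
      using k0 K_iff by (simp add: power_mult[symmetric] mult.commute)
    finally show "(k0 + (\<Sum>j<m. (\<delta> * y) ^ (q ^ j))) ^ q = k0 + (\<Sum>j<m. (\<delta> * y) ^ (q ^ j))"
      using shift by simp
  qed
  moreover have "(\<Sum>y\<in>UNIV. (k0 + (\<Sum>j<m. (\<delta> * y) ^ (q ^ j))) * y ^ s) = 0"
    if s: "s < q ^ m - 1" "qwt q s < m * (q - 1) - 1" for s
  proof -
    have "s < n" using s n_def by simp
    have "(\<Sum>y\<in>UNIV. (k0 + (\<Sum>j<m. (\<delta> * y) ^ (q ^ j))) * y ^ s)
        = k0 * (\<Sum>y\<in>UNIV. y ^ s) + (\<Sum>j<m. \<delta> ^ (q ^ j) * (\<Sum>y\<in>UNIV. y ^ (q ^ j + s)))"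
    proof -
      have "(k0 + (\<Sum>j<m. (\<delta> * y) ^ (q ^ j))) * y ^ s = k0 * y ^ s + (\<Sum>j<m. \<delta> ^ (q ^ j) * y ^ (q ^ j + s))" for y
      proof -
        have "(k0 + (\<Sum>j<m. (\<delta> * y) ^ (q ^ j))) * y ^ s = k0 * y ^ s + (\<Sum>j<m. (\<delta> * y) ^ (q ^ j) * y ^ s)"
          by (simp only: distrib_right sum_distrib_right)
        also have "(\<Sum>j<m. (\<delta> * y) ^ (q ^ j) * y ^ s) = (\<Sum>j<m. \<delta> ^ (q ^ j) * y ^ (q ^ j + s))"
          by (rule sum.cong) (simp_all only: power_mult_distrib power_add mult.assoc)
        finally show ?thesis .
      qed
      hence "(\<Sum>y\<in>UNIV. (k0 + (\<Sum>j<m. (\<delta> * y) ^ (q ^ j))) * y ^ s)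
          = (\<Sum>y\<in>UNIV. k0 * y ^ s) + (\<Sum>y\<in>UNIV. \<Sum>j<m. \<delta> ^ (q ^ j) * y ^ (q ^ j + s))"
        by (simp add: sum.distrib)
      also have "(\<Sum>y\<in>UNIV. \<Sum>j<m. \<delta> ^ (q ^ j) * y ^ (q ^ j + s)) = (\<Sum>j<m. \<Sum>y\<in>UNIV. \<delta> ^ (q ^ j) * y ^ (q ^ j + s))"
        by (rule sum.swap)
      finally show ?thesis by (simp add: sum_distrib_left)
    qed
    also have "(\<Sum>y\<in>UNIV. (y::'b) ^ s) = 0"
    proof (rule powsum_zero)
      show "s = 0 \<or> \<not> n dvd s"
      proof (cases "s = 0")
        case False thus ?thesis using \<open>s < n\<close> nat_dvd_not_less by simp
      qed simp
    qed
    also have "(\<Sum>j<m. \<delta> ^ (q ^ j) * (\<Sum>y\<in>UNIV. y ^ (q ^ j + s))) = 0"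
    proof (intro sum.neutral ballI)
      fix j assume "j \<in> {..<m}"
      hence "q ^ j \<le> n" using qj_le_n by simp
      have "\<not> n dvd (q ^ j + s)"
      proof
        assume "n dvd (q ^ j + s)"
        then obtain t where t: "q ^ j + s = n * t" by blast
        have "0 < q ^ j + s" "q ^ j + s < n * 2" using \<open>s < n\<close> \<open>q ^ j \<le> n\<close> q_ge2 by simp_all
        hence "0 < n * t" "n * t < n * 2" using t by simp_all
        hence "t < 2" "0 < t" using n_gt by simp_all
        hence "t = 1" by simp
        hence "s = n - q ^ j" using t by simp
        hence "qwt q s + 1 = m * (q - 1)" using wd_near[OF q_ge2] \<open>j \<in> {..<m}\<close> n_def qwt_wd[OF q_ge2] by simp
        thus False using s(2) by simp
      qed
      thus "\<delta> ^ (q ^ j) * (\<Sum>y\<in>UNIV. y ^ (q ^ j + s)) = 0" by (simp add: powsum_zero)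
    qed
    finally show ?thesis by simp
  qed
  ultimately show ?thesis by (simp add: rm_code_def)
qed

end

context rmctx begin

lemma nq_inj: "inj_on (\<lambda>j. n - q ^ j) {..<m}"
proof (rule inj_onI)
  fix i j assume ij: "i \<in> {..<m}" "j \<in> {..<m}" "n - q ^ i = n - q ^ j"
  have "q ^ i \<le> n" "q ^ j \<le> n" using ij qj_le_n by auto
  hence "q ^ i = q ^ j" using ij(3) by simp
  thus "i = j" using q_ge2 by (simp add: power_inject_exp)
qed

lemma C1_struct:
  fixes c :: "'b \<Rightarrow> 'b"
  assumes c: "c \<in> rm_code q m 1"
  shows "\<exists>d. \<forall>y. c y = c 0 + (\<Sum>j<m. d j * y ^ (q ^ j))"
proof -
  define A where "A s = (\<Sum>x\<in>UNIV. c x * x ^ s)" for s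
  have H: "\<forall>s. s < q ^ m - 1 \<and> qwt q s < m * (q - 1) - 1 \<longrightarrow> A s = 0"
    using c unfolding rm_code_def A_def by simp
  have A0: "A s = 0" if s: "s < n" "\<forall>j<m. s \<noteq> n - q ^ j" for s
  proof -
    have "qwt q s < m * (q - 1) - 1"
    proof (rule ccontr)
      assume "\<not> qwt q s < m * (q - 1) - 1"
      hence "m * (q - 1) < wd q s + 2" using mq_ge2 qwt_wd[OF q_ge2] by simp
      moreover have "s < q ^ m" using s n_def by simp
      ultimately have "s = q ^ m - 1 \<or> (\<exists>j<m. s = q ^ m - 1 - q ^ j)" using wd_big[OF q_ge2] by blast
      thus False using s n_def by auto
    qed
    thus ?thesis using H s n_def by simp
  qed
  have key: "c y = c 0 - (\<Sum>j<m. A (n - q ^ j) * y ^ (q ^ j))" if y: "y \<noteq> 0" for y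
  proof -
    define iy where "iy = inverse y"
    have iyn: "iy ^ n = 1" using pow_n_nz[OF y] by (simp add: iy_def power_inverse)
    have G: "(\<Sum>s<n. (x * iy) ^ s) = (if x = 0 then 1 else if x = y then -1 else 0)" for x
    proof (cases "x = 0")
      case True thus ?thesis using n_gt by (simp add: sum_gp_strict)
    next
      case False
      show ?thesis
      proof (cases "x = y")
        case True thus ?thesis using y False of_nat_n by (simp add: iy_def)
      next
        case False2: False
        have "x * iy \<noteq> 1" using y False2 by (simp add: iy_def field_simps)
        moreover have "(x * iy) ^ n = 1" using pow_n_nz[OF False] iyn by (simp add: power_mult_distrib)
        ultimately show ?thesis using False False2 by (simp add: sum_gp_strict)
      qed
    qed
    have "(\<Sum>s<n. A s * iy ^ s) = (\<Sum>s<n. \<Sum>x\<in>UNIV. c x * (x * iy) ^ s)"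
      unfolding A_def by (simp add: sum_distrib_right power_mult_distrib mult.assoc)
    also have "\<dots> = (\<Sum>x\<in>UNIV. \<Sum>s<n. c x * (x * iy) ^ s)" by (rule sum.swap)
    also have "\<dots> = (\<Sum>x\<in>UNIV. (if x = 0 then c 0 else 0) + (if x = y then - c y else 0))"
      by (rule sum.cong) (use y in \<open>simp_all add: G flip: sum_distrib_left\<close>)
    also have "\<dots> = c 0 - c y" by (simp add: sum.distrib)
    finally have L: "(\<Sum>s<n. A s * iy ^ s) = c 0 - c y" .
    let ?E = "(\<lambda>j. n - q ^ j) ` {..<m}"
    have "(\<Sum>s<n. A s * iy ^ s) = (\<Sum>s\<in>?E. A s * iy ^ s)"
    proof (rule sum.mono_neutral_right)
      show "?E \<subseteq> {..<n}" using q_ge2 n_gt by auto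
      show "\<forall>s\<in>{..<n} - ?E. A s * iy ^ s = 0" using A0 by auto
    qed simp
    also have "\<dots> = (\<Sum>j<m. A (n - q ^ j) * iy ^ (n - q ^ j))"
      by (subst sum.reindex[OF nq_inj]) simp
    also have "\<dots> = (\<Sum>j<m. A (n - q ^ j) * y ^ (q ^ j))"
    proof (rule sum.cong)
      fix j assume "j \<in> {..<m}"
      hence "q ^ j \<le> n" using qj_le_n by simp
      hence "y ^ (n - q ^ j) * y ^ (q ^ j) = 1" using pow_n_nz[OF y] by (simp flip: power_add)
      hence "inverse (y ^ (n - q ^ j)) = y ^ (q ^ j)" by (rule inverse_unique)
      thus "A (n - q ^ j) * iy ^ (n - q ^ j) = A (n - q ^ j) * y ^ (q ^ j)"
        by (simp add: iy_def power_inverse)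
    qed simp
    finally show ?thesis using L by (simp add: algebra_simps)
  qed
  show ?thesis
  proof (intro exI allI)
    fix y
    show "c y = c 0 + (\<Sum>j<m. - A (n - q ^ j) * y ^ (q ^ j))"
    proof (cases "y = 0")
      case True
      have "(\<Sum>j<m. - A (n - q ^ j) * y ^ (q ^ j)) = 0"
        by (rule sum.neutral) (use True q_ge2 in \<open>simp add: power_0_left\<close>)
      thus ?thesis using True by simp
    next
      case False thus ?thesis using key[OF False] by (simp add: sum_negf)
    qed
  qed
qed

end


lemma vander:
  fixes c z :: "nat \<Rightarrow> 'b::field"
  assumes inj: "inj_on z {..<d}" and van: "\<forall>k<d. (\<Sum>j<d. c j * z k ^ j) = 0"
  shows "\<forall>j<d. c j = 0"
proof -
  define P where "P = (\<Sum>j<d. monom (c j) j)"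
  have polyP: "poly P x = (\<Sum>j<d. c j * x ^ j)" for x by (simp add: P_def poly_sum poly_monom)
  have coeffP: "coeff P j = (if j < d then c j else 0)" for j
    by (simp add: P_def coeff_sum coeff_monom)
  have "P = 0"
  proof (rule ccontr)
    assume "P \<noteq> 0"
    hence "d > 0" by (rule_tac ccontr) (simp add: P_def)
    have "degree P \<le> d - 1"
      by (rule degree_le) (use \<open>d > 0\<close> in \<open>auto simp: coeffP\<close>)
    have "z ` {..<d} \<subseteq> {x. poly P x = 0}" using van by (auto simp: polyP)
    hence "card (z ` {..<d}) \<le> card {x. poly P x = 0}"
      by (intro card_mono poly_roots_finite \<open>P \<noteq> 0\<close>)
    also have "\<dots> \<le> degree P" by (rule card_poly_roots_bound[OF \<open>P \<noteq> 0\<close>])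
    finally show False using card_image[OF inj] \<open>degree P \<le> d - 1\<close> \<open>d > 0\<close> by simp
  qed
  thus ?thesis using coeffP by (metis coeff_0)
qed

lemma dvd_qm_coprime:
  fixes r q m :: nat
  assumes "r dvd q ^ m - 1" "q > 0" "m > 0"
  shows "coprime r q"
proof (rule coprimeI)
  fix d assume "d dvd r" "d dvd q"
  hence "d dvd q ^ m - 1" "d dvd q ^ m" using assms(1) dvd_trans dvd_power[of m q] assms(3)
    by blast+
  hence "d dvd q ^ m - (q ^ m - 1)" by (rule_tac dvd_diff_nat[OF \<open>d dvd q^m\<close>])
  moreover have "q ^ m - (q ^ m - 1) = 1" using assms(2) by simp
  ultimately show "is_unit d" by simp
qed

lemma pow_diff_factor: "(x::nat) \<le> y \<Longrightarrow> (q::nat) ^ y - q ^ x = q ^ x * (q ^ (y - x) - 1)"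
proof -
  assume "x \<le> y"
  hence "q ^ x * q ^ (y - x) = q ^ y" by (simp flip: power_add)
  thus ?thesis by (simp add: diff_mult_distrib2)
qed

context rmctx begin

lemma pow_eq_diff1: "(\<gamma>::'b) \<noteq> 0 \<Longrightarrow> \<gamma> ^ A = \<gamma> ^ B \<Longrightarrow> A \<le> B \<Longrightarrow> \<gamma> ^ (B - A) = 1"
proof -
  assume "\<gamma> \<noteq> 0" "\<gamma> ^ A = \<gamma> ^ B" "A \<le> B"
  have "\<gamma> ^ A * \<gamma> ^ (B - A) = \<gamma> ^ B" using \<open>A \<le> B\<close> by (simp flip: power_add)
  hence "\<gamma> ^ A * \<gamma> ^ (B - A) = \<gamma> ^ A * 1" using \<open>\<gamma> ^ A = \<gamma> ^ B\<close> by simp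
  thus ?thesis using \<open>\<gamma> \<noteq> 0\<close> by simp
qed

end

context rmctx begin

lemma indep_core:
  fixes \<gamma>1 \<gamma>2 :: 'b and r1 r2 a :: nat and g :: "nat \<times> nat \<Rightarrow> 'b"
  assumes nr: "n = r1 * r2" and cop: "coprime r1 r2" and a_def: "a = ord r1 q"
    and g1: "\<And>t. \<gamma>1 ^ t = 1 \<longleftrightarrow> r1 dvd t" and g2: "\<And>t. \<gamma>2 ^ t = 1 \<longleftrightarrow> r2 dvd t"
    and gK: "\<forall>i\<in>{..<a} \<times> {..<m div a}. g i \<in> KK"
    and z: "(\<Sum>i\<in>{..<a} \<times> {..<m div a}. g i * (\<gamma>1 ^ fst i * \<gamma>2 ^ snd i)) = 0"
  shows "\<forall>i\<in>{..<a} \<times> {..<m div a}. g i = 0"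
proof -
  have r1q: "r1 dvd q ^ m - 1" "r2 dvd q ^ m - 1" using nr n_def by (metis dvd_triv_left dvd_triv_right)+
  have qpos: "q > 0" using q_ge2 by simp
  have mpos: "m > 0" using m_pos by simp
  have cop1: "coprime r1 q" "coprime r2 q" using dvd_qm_coprime[OF _ qpos mpos] r1q by blast+
  have apos: "a > 0" using a_def cop1(1) by simp
  have qa: "[q ^ a = 1] (mod r1)" using ord_works a_def by blast
  have "[q ^ m = 1] (mod r1)" using r1q(1) qpos by (simp add: cong_altdef_nat)
  hence adm: "a dvd m" using ord_divides a_def by blast
  define d where "d = m div a"
  have md: "m = a * d" using adm d_def by simp
  have r1pos: "r1 > 0" "r2 > 0" using nr n_gt by (auto intro!: Nat.gr0I)
  have g1nz: "\<gamma>1 \<noteq> 0"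
  proof
    assume "\<gamma>1 = 0" hence "\<gamma>1 ^ r1 = 0" using r1pos by simp
    moreover have "\<gamma>1 ^ r1 = 1" using g1 by simp
    ultimately show False by simp
  qed
  have g2nz: "\<gamma>2 \<noteq> 0"
  proof
    assume "\<gamma>2 = 0" hence "\<gamma>2 ^ r2 = 0" using r1pos by simp
    moreover have "\<gamma>2 ^ r2 = 1" using g2 by simp
    ultimately show False by simp
  qed
  have qat: "r1 dvd q ^ (a * t) - 1" for t
  proof -
    have "[(q ^ a) ^ t = 1 ^ t] (mod r1)" using qa by (rule cong_pow)
    hence "[q ^ (a * t) = 1] (mod r1)" by (simp add: power_mult)
    thus ?thesis by (rule cong_to_1_nat)
  qed
  have g1fix: "\<gamma>1 ^ (q ^ (a * t)) = \<gamma>1" for t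
  proof -
    have "q ^ (a * t) \<ge> 1" using qpos by simp
    hence "\<gamma>1 ^ (q ^ (a * t)) = \<gamma>1 * \<gamma>1 ^ (q ^ (a * t) - 1)"
      by (metis One_nat_def Suc_pred' less_le_trans power_Suc zero_less_one)
    also have "\<gamma>1 ^ (q ^ (a * t) - 1) = 1" using g1 qat by simp
    finally show ?thesis by simp
  qed
  have pcomm: "(x ^ i) ^ Q = (x ^ Q) ^ i" for x :: 'b and i Q
    by (simp flip: power_mult add: mult.commute)
  define c where "c j = (\<Sum>i<a. g (i, j) * \<gamma>1 ^ i)" for j
  have cfix: "c j ^ (q ^ (a * t)) = c j" if "j < d" for j t
  proof -
    have "c j ^ (q ^ (a * t)) = (\<Sum>i<a. g (i, j) ^ (q ^ (a * t)) * (\<gamma>1 ^ i) ^ (q ^ (a * t)))"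
      unfolding c_def by (rule frob_mult_sum)
    also have "\<dots> = c j" unfolding c_def
    proof (rule sum.cong)
      fix i assume "i \<in> {..<a}"
      hence "g (i, j) \<in> KK" using gK that d_def by auto
      thus "g (i, j) ^ (q ^ (a * t)) * (\<gamma>1 ^ i) ^ (q ^ (a * t)) = g (i, j) * \<gamma>1 ^ i"
        by (simp add: K_pow pcomm[of \<gamma>1 i "q ^ (a * t)"] g1fix)
    qed simp
    finally show ?thesis .
  qed
  have zsum: "(\<Sum>j<d. c j * \<gamma>2 ^ j) = 0"
  proof -
    have "(\<Sum>i\<in>{..<a} \<times> {..<d}. g i * (\<gamma>1 ^ fst i * \<gamma>2 ^ snd i))
        = (\<Sum>i1<a. \<Sum>j<d. g (i1, j) * (\<gamma>1 ^ i1 * \<gamma>2 ^ j))"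
      by (simp add: sum.cartesian_product split_def)
    also have "\<dots> = (\<Sum>j<d. \<Sum>i1<a. g (i1, j) * (\<gamma>1 ^ i1 * \<gamma>2 ^ j))" by (rule sum.swap)
    also have "\<dots> = (\<Sum>j<d. c j * \<gamma>2 ^ j)"
      unfolding c_def by (simp add: sum_distrib_right mult.assoc)
    finally show ?thesis using z d_def by simp
  qed
  have van2: "\<forall>k<d. (\<Sum>j<d. c j * (\<gamma>2 ^ (q ^ (a * k))) ^ j) = 0"
  proof (intro allI impI)
    fix k assume "k < d"
    have "(\<Sum>j<d. c j * \<gamma>2 ^ j) ^ (q ^ (a * k)) = (\<Sum>j<d. c j ^ (q ^ (a * k)) * (\<gamma>2 ^ j) ^ (q ^ (a * k)))"
      by (rule frob_mult_sum)
    also have "\<dots> = (\<Sum>j<d. c j * (\<gamma>2 ^ (q ^ (a * k))) ^ j)"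
      by (rule sum.cong) (simp_all add: cfix pcomm)
    finally show "(\<Sum>j<d. c j * (\<gamma>2 ^ (q ^ (a * k))) ^ j) = 0" using zsum q_ge2 by (simp add: power_0_left)
  qed
  have aux2: "\<gamma>2 ^ (q ^ (a * k)) \<noteq> \<gamma>2 ^ (q ^ (a * k'))" if kk: "k < k'" "k' < d" for k k'
  proof
    assume eq: "\<gamma>2 ^ (q ^ (a * k)) = \<gamma>2 ^ (q ^ (a * k'))"
    have le: "a * k \<le> a * k'" using kk by simp
    hence "q ^ (a * k) \<le> q ^ (a * k')" using qpos by (simp add: power_increasing)
    hence "\<gamma>2 ^ (q ^ (a * k') - q ^ (a * k)) = 1" using pow_eq_diff1[OF g2nz eq] by simp
    hence "r2 dvd q ^ (a * k) * (q ^ (a * k' - a * k) - 1)"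
      using g2 pow_diff_factor[OF le, of q] by simp
    moreover have "coprime r2 (q ^ (a * k))" using cop1(2) by simp
    ultimately have "r2 dvd q ^ (a * k' - a * k) - 1" using coprime_dvd_mult_right_iff by blast
    moreover have "r1 dvd q ^ (a * k' - a * k) - 1"
      using qat[of "k' - k"] by (simp add: diff_mult_distrib2)
    ultimately have "r1 * r2 dvd q ^ (a * k' - a * k) - 1" using cop by (simp add: divides_mult)
    hence ndvd: "n dvd q ^ (a * k' - a * k) - 1" using nr by simp
    have Dpos: "a * k' - a * k > 0" using kk apos by simp
    hence "1 \<le> a * k' - a * k" by linarith
    hence qD: "q ^ 1 \<le> q ^ (a * k' - a * k)" by (rule power_increasing) (use qpos in simp)
    hence "q ^ (a * k' - a * k) - 1 > 0" using q_ge2 by simp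
    hence "n \<le> q ^ (a * k' - a * k) - 1" using ndvd by (simp add: dvd_imp_le)
    hence "q ^ m \<le> q ^ (a * k' - a * k)" using n_def qm_pos qD q_ge2 power_one_right[of q] by linarith
    hence "m \<le> a * k' - a * k" using q_ge2 by (simp add: power_le_imp_le_exp)
    moreover have "a * k' - a * k < a * d" using kk apos by (simp add: diff_mult_distrib2[symmetric])
    ultimately show False using md by simp
  qed
  have inj2: "inj_on (\<lambda>k. \<gamma>2 ^ (q ^ (a * k))) {..<d}"
  proof (rule inj_onI)
    fix k k' assume "k \<in> {..<d}" "k' \<in> {..<d}" "\<gamma>2 ^ (q ^ (a * k)) = \<gamma>2 ^ (q ^ (a * k'))"
    thus "k = k'" using aux2[of k k'] aux2[of k' k] by (cases k k' rule: linorder_cases) auto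
  qed
  have c0: "\<forall>j<d. c j = 0" using vander[OF inj2 van2] .
  have aux1: "\<gamma>1 ^ (q ^ k) \<noteq> \<gamma>1 ^ (q ^ k')" if kk: "k < k'" "k' < a" for k k'
  proof
    assume eq: "\<gamma>1 ^ (q ^ k) = \<gamma>1 ^ (q ^ k')"
    have le: "k \<le> k'" using kk by simp
    hence "q ^ k \<le> q ^ k'" using qpos by (simp add: power_increasing)
    hence "\<gamma>1 ^ (q ^ k' - q ^ k) = 1" using pow_eq_diff1[OF g1nz eq] by simp
    hence "r1 dvd q ^ k * (q ^ (k' - k) - 1)" using g1 pow_diff_factor[OF le, of q] by simp
    moreover have "coprime r1 (q ^ k)" using cop1(1) by simp
    ultimately have "r1 dvd q ^ (k' - k) - 1" using coprime_dvd_mult_right_iff by blast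
    hence "[q ^ (k' - k) = 1] (mod r1)" using qpos by (simp add: cong_altdef_nat)
    moreover have "0 < k' - k" "k' - k < ord r1 q" using kk a_def by auto
    ultimately show False using ord_minimal by blast
  qed
  have inj1: "inj_on (\<lambda>k. \<gamma>1 ^ (q ^ k)) {..<a}"
  proof (rule inj_onI)
    fix k k' assume "k \<in> {..<a}" "k' \<in> {..<a}" "\<gamma>1 ^ (q ^ k) = \<gamma>1 ^ (q ^ k')"
    thus "k = k'" using aux1[of k k'] aux1[of k' k] by (cases k k' rule: linorder_cases) auto
  qed
  have gz: "g (i, j) = 0" if ij: "i < a" "j < d" for i j
  proof -
    have van1: "\<forall>k<a. (\<Sum>i<a. g (i, j) * (\<gamma>1 ^ (q ^ k)) ^ i) = 0"
    proof (intro allI impI)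
      fix k assume "k < a"
      have "c j ^ (q ^ k) = (\<Sum>i<a. g (i, j) ^ (q ^ k) * (\<gamma>1 ^ i) ^ (q ^ k))"
        unfolding c_def by (rule frob_mult_sum)
      also have "\<dots> = (\<Sum>i<a. g (i, j) * (\<gamma>1 ^ (q ^ k)) ^ i)"
      proof (rule sum.cong)
        fix i assume "i \<in> {..<a}"
        hence "g (i, j) \<in> KK" using gK ij d_def by auto
        thus "g (i, j) ^ (q ^ k) * (\<gamma>1 ^ i) ^ (q ^ k) = g (i, j) * (\<gamma>1 ^ (q ^ k)) ^ i"
          by (simp add: K_pow pcomm[of \<gamma>1 i "q ^ k"])
      qed simp
      finally show "(\<Sum>i<a. g (i, j) * (\<gamma>1 ^ (q ^ k)) ^ i) = 0" using c0 ij q_ge2 by (simp add: power_0_left)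
    qed
    show ?thesis using vander[OF inj1 van1] ij by simp
  qed
  show ?thesis using gz d_def by auto
qed

end


context rmctx begin

lemma tr_zero:
  fixes \<epsilon> :: 'b
  assumes "\<forall>y. (\<Sum>j<m. (\<epsilon> * y) ^ (q ^ j)) = 0"
  shows "\<epsilon> = 0"
proof (rule ccontr)
  assume ne: "\<epsilon> \<noteq> 0"
  define P where "P = (\<Sum>j<m. monom (\<epsilon> ^ (q ^ j)) (q ^ j))"
  have polyP: "poly P y = (\<Sum>j<m. (\<epsilon> * y) ^ (q ^ j))" for y
    by (simp add: P_def poly_sum poly_monom power_mult_distrib)
  have injq: "inj (\<lambda>j. q ^ j)" using q_ge2 by (auto simp: inj_def power_inject_exp)
  have "coeff P (q ^ (m - 1)) = (\<Sum>j<m. if q ^ j = q ^ (m - 1) then \<epsilon> ^ (q ^ j) else 0)"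
    by (simp add: P_def coeff_sum coeff_monom)
  also have "\<dots> = (\<Sum>j<m. if j = m - 1 then \<epsilon> ^ (q ^ (m - 1)) else 0)"
    by (rule sum.cong) (use injq in \<open>auto simp: inj_eq\<close>)
  also have "\<dots> = \<epsilon> ^ (q ^ (m - 1))" using m_pos by simp
  finally have "coeff P (q ^ (m - 1)) \<noteq> 0" using ne by simp
  hence P0: "P \<noteq> 0" by auto
  have "degree P \<le> q ^ (m - 1)" unfolding P_def
  proof (rule degree_sum_le)
    fix j assume "j \<in> {..<m}"
    hence "q ^ j \<le> q ^ (m - 1)" using q_ge2 by (intro power_increasing) auto
    thus "degree (monom (\<epsilon> ^ (q ^ j)) (q ^ j)) \<le> q ^ (m - 1)"
      using degree_monom_le order_trans by blast
  qed simp
  moreover have "{y. poly P y = 0} = UNIV" using assms polyP by auto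
  ultimately have "q ^ m \<le> q ^ (m - 1)" using card_poly_roots_bound[OF P0] card_F by simp
  moreover have "q ^ (m - 1) < q ^ m" using q_ge2 m_pos by (intro power_strict_increasing) auto
  ultimately show False by simp
qed

end

locale basisctx = rmctx q m n p e \<alpha> for q m n p e :: nat and \<alpha> :: "'b::{finite,field}" +
  fixes B :: "'b set"
  assumes cardB: "card B = m"
    and indepB: "\<And>g. (\<forall>b\<in>B. g b \<in> KK) \<Longrightarrow> (\<Sum>b\<in>B. g b * b) = 0 \<Longrightarrow> \<forall>b\<in>B. g b = 0"
begin

lemma finB: "finite B" by simp

lemma zero_notin_B: "0 \<notin> B"
proof
  assume "0 \<in> B"
  have "\<forall>b\<in>B. (if b = 0 then 1 else 0) = (0::'b)"
  proof (rule indepB)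
    show "(\<Sum>b\<in>B. (if b = 0 then 1 else 0) * b) = 0" by (rule sum.neutral) auto
  qed (auto simp: K_0 K_1)
  thus False using \<open>0 \<in> B\<close> by auto
qed

definition comb :: "('b \<Rightarrow> 'b) \<Rightarrow> 'b" where "comb g = (\<Sum>b\<in>B. g b * b)"

lemma comb_inj: "inj_on comb (PiE B (\<lambda>_. KK))"
proof (rule inj_onI)
  fix g g' assume g: "g \<in> PiE B (\<lambda>_. KK)" "g' \<in> PiE B (\<lambda>_. KK)" "comb g = comb g'"
  have "(\<Sum>b\<in>B. (g b - g' b) * b) = comb g - comb g'"
    by (simp add: comb_def left_diff_distrib sum_subtractf)
  hence "(\<Sum>b\<in>B. (g b - g' b) * b) = 0" using g(3) by simp
  moreover have "\<forall>b\<in>B. g b - g' b \<in> KK" using g(1,2) by (auto intro: K_diff)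
  ultimately have "\<forall>b\<in>B. g b - g' b = 0" using indepB[of "\<lambda>b. g b - g' b"] by simp
  thus "g = g'" using g(1,2) by (intro PiE_ext) auto
qed

lemma card_PiB: "card (PiE B (\<lambda>_. KK)) = q ^ m"
  by (simp add: card_PiE card_K cardB)

lemma span: "\<exists>g. (\<forall>b\<in>B. g b \<in> KK) \<and> y = (\<Sum>b\<in>B. g b * b)"
proof -
  have "comb ` PiE B (\<lambda>_. KK) = UNIV"
  proof (rule card_subset_eq)
    show "card (comb ` PiE B (\<lambda>_. KK)) = card (UNIV :: 'b set)"
      using card_image[OF comb_inj] card_PiB card_F by simp
  qed auto
  hence "y \<in> comb ` PiE B (\<lambda>_. KK)" by simp
  then obtain g where "g \<in> PiE B (\<lambda>_. KK)" "y = comb g" by blast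
  thus ?thesis unfolding comb_def by (intro exI[of _ g]) auto
qed

definition trm :: "'b \<Rightarrow> 'b \<Rightarrow> 'b" where "trm \<delta> y = (\<Sum>j<m. (\<delta> * y) ^ (q ^ j))"

lemma trm_K: "trm \<delta> y \<in> KK"
  using tr_in_C1[OF K_0, of \<delta>] by (simp add: rm_code_def words_iff trm_def)

lemma trm_lin: "(\<forall>b\<in>B. g b \<in> KK) \<Longrightarrow> trm \<delta> (\<Sum>b\<in>B. g b * b) = (\<Sum>b\<in>B. g b * trm \<delta> b)"
proof -
  assume gK: "\<forall>b\<in>B. g b \<in> KK"
  have "trm \<delta> (\<Sum>b\<in>B. g b * b) = (\<Sum>j<m. (\<Sum>b\<in>B. g b * (\<delta> * b)) ^ (q ^ j))"
    by (simp add: trm_def sum_distrib_left mult.left_commute)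
  also have "\<dots> = (\<Sum>j<m. \<Sum>b\<in>B. g b * (\<delta> * b) ^ (q ^ j))"
    by (rule sum.cong) (simp_all add: frob_mult_sum K_pow gK)
  also have "\<dots> = (\<Sum>b\<in>B. g b * trm \<delta> b)"
    by (subst sum.swap) (simp add: trm_def sum_distrib_left)
  finally show ?thesis .
qed

definition Psi :: "'b \<Rightarrow> 'b \<Rightarrow> 'b" where "Psi \<delta> = restrict (trm \<delta>) B"

lemma Psi_bij: "Psi ` UNIV = PiE B (\<lambda>_. KK)"
proof -
  have sub: "Psi ` UNIV \<subseteq> PiE B (\<lambda>_. KK)" by (auto simp: Psi_def trm_K)
  have inj: "inj Psi"
  proof (rule injI)
    fix \<delta> \<delta>' assume "Psi \<delta> = Psi \<delta>'"
    hence eqB: "\<forall>b\<in>B. trm \<delta> b = trm \<delta>' b" unfolding Psi_def by (metis restrict_apply')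
    have d: "trm (\<delta> - \<delta>') y = trm \<delta> y - trm \<delta>' y" for y
      by (simp add: trm_def left_diff_distrib frob_minus sum_subtractf)
    have "trm (\<delta> - \<delta>') y = 0" for y
    proof -
      obtain g where g: "\<forall>b\<in>B. g b \<in> KK" "y = (\<Sum>b\<in>B. g b * b)" using span by blast
      have "trm (\<delta> - \<delta>') y = (\<Sum>b\<in>B. g b * trm (\<delta> - \<delta>') b)" using trm_lin[OF g(1)] g(2) by simp
      also have "\<dots> = 0" using eqB d by simp
      finally show ?thesis .
    qed
    hence "\<delta> - \<delta>' = 0" using tr_zero unfolding trm_def by blast
    thus "\<delta> = \<delta>'" by simp
  qed
  show ?thesis
  proof (rule card_subset_eq[OF _ sub])
    show "finite (PiE B (\<lambda>_. KK))" by (simp add: finite_PiE)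
    show "card (Psi ` UNIV) = card (PiE B (\<lambda>_. KK))"
      using card_image[OF inj] card_PiB card_F by simp
  qed
qed

end


context basisctx begin

lemma C1_vals: "(c::'b\<Rightarrow>'b) \<in> rm_code q m \<rho> \<Longrightarrow> c x \<in> KK"
  by (simp add: rm_code_def words_iff)

lemma info1: "info_set KK (rm_code q m 1) (insert 0 B)"
proof -
  have surj1: "\<exists>c\<in>rm_code q m 1. \<forall>x\<in>insert 0 B. c x = f x" if f: "\<forall>x\<in>insert 0 B. f x \<in> KK" for f :: "'b \<Rightarrow> 'b"
  proof -
    define h where "h = restrict (\<lambda>b. f b - f 0) B"
    have "h \<in> PiE B (\<lambda>_. KK)" unfolding h_def
    proof (rule restrict_PiE_iff[THEN iffD2], intro ballI)
      fix b assume "b \<in> B" thus "f b - f 0 \<in> KK" using f by (intro K_diff) auto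
    qed
    hence "h \<in> Psi ` UNIV" by (simp only: Psi_bij)
    then obtain \<delta> where hd: "h = Psi \<delta>" by (rule imageE) simp
    have cC: "(\<lambda>y. f 0 + trm \<delta> y) \<in> rm_code q m 1"
      using tr_in_C1[of "f 0" \<delta>] f unfolding trm_def by simp
    have t0: "trm \<delta> 0 = 0" unfolding trm_def using q_ge2 by (simp add: power_0_left)
    have E: "\<forall>x\<in>insert 0 B. f 0 + trm \<delta> x = f x"
    proof
      fix x assume "x \<in> insert 0 B"
      thus "f 0 + trm \<delta> x = f x"
      proof
        assume "x = 0" thus ?thesis using t0 by simp
      next
        assume "x \<in> B"
        hence "trm \<delta> x = h x" using hd by (simp add: Psi_def)
        thus ?thesis using \<open>x \<in> B\<close> by (simp add: h_def)
      qed
    qed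
    show ?thesis by (rule bexI[OF _ cC]) (use E in simp)
  qed
  have inj1: "\<forall>x. c x = 0" if c: "c \<in> rm_code q m 1" "\<forall>x\<in>insert 0 B. c x = 0" for c :: "'b \<Rightarrow> 'b"
  proof
    fix y
    obtain d where d: "\<forall>y. c y = c 0 + (\<Sum>j<m. d j * y ^ (q ^ j))" using C1_struct[OF c(1)] by blast
    define L where "L y = (\<Sum>j<m. d j * y ^ (q ^ j))" for y
    have c0: "c 0 = 0" using c(2) by simp
    have Lb: "L b = 0" if "b \<in> B" for b
    proof -
      have "c b = c 0 + L b" using d unfolding L_def by blast
      thus ?thesis using c(2) that c0 by simp
    qed
    obtain g where g: "\<forall>b\<in>B. g b \<in> KK" "y = (\<Sum>b\<in>B. g b * b)" using span by blast
    have "L y = (\<Sum>j<m. d j * (\<Sum>b\<in>B. g b * b ^ (q ^ j)))"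
      unfolding L_def g(2) by (rule sum.cong) (simp_all add: frob_mult_sum K_pow g(1))
    also have "\<dots> = (\<Sum>b\<in>B. g b * L b)"
      unfolding L_def by (simp add: sum_distrib_left mult.left_commute) (rule sum.swap)
    also have "\<dots> = 0" using Lb by simp
    finally show "c y = 0" using d c0 L_def by simp
  qed
  have "code_dim KK (rm_code q m 1) = card (insert 0 B)"
  proof (rule code_dim_eq[OF subf_K])
    show "finite (insert 0 B)" by simp
  next
    fix S :: "('b \<Rightarrow> 'b) set" and g assume "finite S" "S \<subseteq> rm_code q m 1" "\<forall>v\<in>S. g v \<in> KK"
    thus "(\<lambda>x. \<Sum>v\<in>S. g v * v x) \<in> rm_code q m 1" by (rule rm_clos)
  next
    fix c :: "'b \<Rightarrow> 'b" and x assume "c \<in> rm_code q m 1" thus "c x \<in> KK" by (rule C1_vals)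
  next
    fix f :: "'b \<Rightarrow> 'b" assume "\<forall>x\<in>insert 0 B. f x \<in> KK"
    thus "\<exists>c\<in>rm_code q m 1. \<forall>x\<in>insert 0 B. c x = f x" by (rule surj1)
  next
    fix c :: "'b \<Rightarrow> 'b" assume "c \<in> rm_code q m 1" "\<forall>x\<in>insert 0 B. c x = 0"
    thus "\<forall>x. c x = 0" by (rule inj1)
  qed
  thus ?thesis unfolding info_set_def using surj1 by auto
qed

lemma card_I1: "card (insert 0 B) = m + 1" using zero_notin_B cardB by simp

end


context basisctx begin

abbreviation JJ :: "'b set" where "JJ \<equiv> UNIV - insert 0 B"

lemma sum_split3: "(\<Sum>x\<in>UNIV. h x) = h 0 + (\<Sum>x\<in>B. h x) + (\<Sum>x\<in>JJ. h x)"
proof -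
  have "(UNIV::'b set) = insert 0 B \<union> JJ" by auto
  hence "(\<Sum>x\<in>UNIV. h x) = (\<Sum>x\<in>insert 0 B. h x) + (\<Sum>x\<in>JJ. h x)"
    by (metis Diff_disjoint finite sum.union_disjoint)
  also have "(\<Sum>x\<in>insert 0 B. h x) = h 0 + (\<Sum>x\<in>B. h x)" using zero_notin_B by simp
  finally show ?thesis .
qed

lemma info2: "info_set KK (rm_code q m (m * (q - 1) - 2)) JJ"
proof -
  let ?C = "rm_code q m (m * (q - 1) - 2) :: ('b \<Rightarrow> 'b) set"
  have surj2: "\<exists>c\<in>?C. \<forall>x\<in>JJ. c x = f x" if f: "\<forall>x\<in>JJ. f x \<in> KK" for f :: "'b \<Rightarrow> 'b"
  proof -
    define w where "w = - (\<Sum>x\<in>JJ. f x * x)"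
    obtain g where g: "\<forall>b\<in>B. g b \<in> KK" "w = (\<Sum>b\<in>B. g b * b)" using span by blast
    define c0 where "c0 = - ((\<Sum>x\<in>JJ. f x) + (\<Sum>b\<in>B. g b))"
    define c where "c x = (if x \<in> JJ then f x else if x \<in> B then g x else c0)" for x
    have c0K: "c0 \<in> KK" unfolding c0_def
      by (intro K_uminus K_add K_sum) (use f g(1) in auto)
    have cK: "\<forall>x. c x \<in> KK" unfolding c_def using f g(1) c0K by auto
    have c_0: "c 0 = c0" using zero_notin_B by (simp add: c_def)
    have cB: "(\<Sum>x\<in>B. h (c x) x) = (\<Sum>x\<in>B. h (g x) x)" for h :: "'b \<Rightarrow> 'b \<Rightarrow> 'b"
      by (rule sum.cong) (auto simp: c_def)
    have cJ: "(\<Sum>x\<in>JJ. h (c x) x) = (\<Sum>x\<in>JJ. h (f x) x)" for h :: "'b \<Rightarrow> 'b \<Rightarrow> 'b"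
      by (rule sum.cong) (auto simp: c_def)
    have s1: "(\<Sum>x\<in>UNIV. c x) = 0"
      using sum_split3[of c] cB[of "\<lambda>a x. a"] cJ[of "\<lambda>a x. a"] c_0 by (simp add: c0_def)
    have s2: "(\<Sum>x\<in>UNIV. c x * x) = 0"
      using sum_split3[of "\<lambda>x. c x * x"] cB[of "\<lambda>a x. a * x"] cJ[of "\<lambda>a x. a * x"]
      by (simp add: g(2)[symmetric] w_def)
    have "c \<in> ?C" using C2_iff cK s1 s2 words_iff by blast
    moreover have "\<forall>x\<in>JJ. c x = f x" by (simp add: c_def)
    ultimately show ?thesis by blast
  qed
  have inj2: "\<forall>x. c x = 0" if c: "c \<in> ?C" "\<forall>x\<in>JJ. c x = 0" for c :: "'b \<Rightarrow> 'b"
  proof -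
    have cc: "c \<in> words q" "(\<Sum>x\<in>UNIV. c x) = 0" "(\<Sum>x\<in>UNIV. c x * x) = 0" using c(1) C2_iff by blast+
    have J0: "(\<Sum>x\<in>JJ. h x * c x) = 0" for h :: "'b \<Rightarrow> 'b" using c(2) by simp
    have "(\<Sum>x\<in>B. c x * x) = 0" using sum_split3[of "\<lambda>x. c x * x"] cc(3) J0[of "\<lambda>x. x"]
      by (simp add: mult.commute)
    hence cB0: "\<forall>b\<in>B. c b = 0" using indepB[of c] cc(1) words_iff by blast
    have "c 0 = 0" using sum_split3[of c] cc(2) cB0 J0[of "\<lambda>x. 1"] by simp
    thus ?thesis using cB0 c(2) by (metis DiffI UNIV_I insertE)
  qed
  have "code_dim KK ?C = card JJ"
  proof (rule code_dim_eq[OF subf_K])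
    show "finite JJ" by simp
  next
    fix S :: "('b \<Rightarrow> 'b) set" and g assume "finite S" "S \<subseteq> ?C" "\<forall>v\<in>S. g v \<in> KK"
    thus "(\<lambda>x. \<Sum>v\<in>S. g v * v x) \<in> ?C" by (rule rm_clos)
  next
    fix c :: "'b \<Rightarrow> 'b" and x assume "c \<in> ?C" thus "c x \<in> KK" by (rule C1_vals)
  next
    fix f :: "'b \<Rightarrow> 'b" assume "\<forall>x\<in>JJ. f x \<in> KK"
    thus "\<exists>c\<in>?C. \<forall>x\<in>JJ. c x = f x" by (rule surj2)
  next
    fix c :: "'b \<Rightarrow> 'b" assume "c \<in> ?C" "\<forall>x\<in>JJ. c x = 0"
    thus "\<forall>x. c x = 0" by (rule inj2)
  qed
  thus ?thesis unfolding info_set_def using surj2 by auto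
qed

end


lemma double_mod_self: "(f::nat) < r \<Longrightarrow> (f + f) mod r = f \<Longrightarrow> f = 0"
proof -
  assume a: "f < r" "(f + f) mod r = f"
  show "f = 0"
  proof (cases "f + f < r")
    case True thus ?thesis using a by simp
  next
    case False
    hence "(f + f) mod r = f + f - r" using a(1) by (simp add: le_mod_geq mod_less)
    thus ?thesis using a by simp
  qed
qed

theorem mainTheorem2:
  fixes q m n r1 r2 a :: nat
    and \<alpha> :: "'b::{finite,field}"
    and T :: "nat \<Rightarrow> nat \<times> nat"
  assumes q_pp: "\<exists>p e. prime p \<and> e \<ge> 1 \<and> q = p ^ e"
    and m_pos: "m \<ge> 1"
    and card_field: "card (UNIV :: 'b set) = q ^ m"
    and n_def: "n = q ^ m - 1"
    and n_fact: "n = r1 * r2"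
    and r1_gt: "r1 > 1" and r2_gt: "r2 > 1"
    and cop: "coprime r1 r2"
    and a_def: "a = ord r1 q"
    and gen: "\<alpha> \<noteq> 0" "\<forall>x::'b. x \<noteq> 0 \<longrightarrow> (\<exists>i. x = \<alpha> ^ i)"
    and T_bij: "bij_betw T {..<n} ({..<r1} \<times> {..<r2})"
    and T_hom: "\<forall>i<n. \<forall>j<n. T ((i + j) mod n) =
                 ((fst (T i) + fst (T j)) mod r1, (snd (T i) + snd (T j)) mod r2)"
  defines "\<Gamma> \<equiv> {(i1, i2). i1 < r1 \<and> i2 < r2 \<and> i1 < a \<and> i2 * a < m}"
  shows "info_set (subfield_Fq q) (rm_code q m 1)
           (insert 0 {\<alpha> ^ i | i. i < n \<and> T i \<in> \<Gamma>})
       \<and> info_set (subfield_Fq q) (rm_code q m (m * (q - 1) - 2))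
           {\<alpha> ^ i | i. i < n \<and> T i \<notin> \<Gamma>}"
proof -
  obtain p e where pe: "prime p" "e \<ge> 1" "q = p ^ e" using q_pp by blast
  have n_gt: "n > 1" unfolding n_fact by (rule less_1_mult[OF r1_gt r2_gt])
  interpret R: rmctx q m n p e \<alpha>
    by unfold_locales (use pe m_pos card_field n_def n_gt gen in auto)
  have Tinj: "inj_on T {..<n}" and Timg: "T ` {..<n} = {..<r1} \<times> {..<r2}"
    using T_bij by (auto simp: bij_betw_def)
  have npos: "0 < n" using n_gt by simp
  have T0: "T 0 = (0, 0)"
  proof -
    have "T 0 \<in> {..<r1} \<times> {..<r2}" using Timg npos by auto
    hence lt: "fst (T 0) < r1" "snd (T 0) < r2" by (auto simp: mem_Times_iff)
    have E: "T 0 = ((fst (T 0) + fst (T 0)) mod r1, (snd (T 0) + snd (T 0)) mod r2)"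
      using T_hom[rule_format, of 0 0] npos by simp
    have e1: "(fst (T 0) + fst (T 0)) mod r1 = fst (T 0)" using arg_cong[OF E, of fst] by simp
    have e2: "(snd (T 0) + snd (T 0)) mod r2 = snd (T 0)" using arg_cong[OF E, of snd] by simp
    have "fst (T 0) = 0" "snd (T 0) = 0"
      using double_mod_self[OF lt(1) e1] double_mod_self[OF lt(2) e2] by simp_all
    thus ?thesis by (simp add: prod_eq_iff)
  qed
  define t1 where "t1 = fst (T 1)"
  define t2 where "t2 = snd (T 1)"
  have Tlin: "T (k mod n) = ((k * t1) mod r1, (k * t2) mod r2)" for k
  proof (induction k)
    case 0 thus ?case using T0 by simp
  next
    case (Suc k)
    have "Suc k mod n = (k mod n + 1) mod n" by (simp add: mod_Suc_eq)
    also have "T \<dots> = ((fst (T (k mod n)) + t1) mod r1, (snd (T (k mod n)) + t2) mod r2)"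
      using T_hom[rule_format, of "k mod n" 1] npos n_gt unfolding t1_def t2_def by simp
    also have "\<dots> = ((Suc k * t1) mod r1, (Suc k * t2) mod r2)"
      using Suc by (simp add: mod_add_left_eq mod_add_right_eq add.commute[of "k * t1" t1] add.commute[of "k * t2" t2])
    finally show ?case .
  qed
  have Tmul: "T ((u * t) mod n) = ((fst (T u) * t) mod r1, (snd (T u) * t) mod r2)" if "u < n" for u t
  proof -
    have "T u = ((u * t1) mod r1, (u * t2) mod r2)" using Tlin[of u] that by simp
    moreover have "(u * t * t1) mod r1 = ((u * t1) mod r1 * t) mod r1"
    proof -
      have "((u * t1) mod r1 * t) mod r1 = (u * t1 * t) mod r1" by (rule mod_mult_left_eq)
      moreover have "u * t1 * t = u * t * t1" by (simp add: mult_ac)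
      ultimately show ?thesis by simp
    qed
    moreover have "(u * t * t2) mod r2 = ((u * t2) mod r2 * t) mod r2"
    proof -
      have "((u * t2) mod r2 * t) mod r2 = (u * t2 * t) mod r2" by (rule mod_mult_left_eq)
      moreover have "u * t2 * t = u * t * t2" by (simp add: mult_ac)
      ultimately show ?thesis by simp
    qed
    ultimately show ?thesis using Tlin[of "u * t"] by simp
  qed
  obtain u1 where u1: "u1 < n" "T u1 = (1, 0)"
  proof -
    have "(1, 0) \<in> T ` {..<n}" using Timg r1_gt r2_gt by simp
    then obtain u where "u \<in> {..<n}" "(1, 0) = T u" by (rule imageE)
    thus ?thesis using that by simp
  qed
  obtain u2 where u2: "u2 < n" "T u2 = (0, 1)"
  proof -
    have "(0, 1) \<in> T ` {..<n}" using Timg r1_gt r2_gt by simp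
    then obtain u where "u \<in> {..<n}" "(0, 1) = T u" by (rule imageE)
    thus ?thesis using that by simp
  qed
  define \<gamma>1 where "\<gamma>1 = \<alpha> ^ u1"
  define \<gamma>2 where "\<gamma>2 = \<alpha> ^ u2"
  have gam_one: "(\<alpha> ^ u) ^ t = 1 \<longleftrightarrow> T ((u * t) mod n) = (0, 0)" if "u < n" for u t
  proof -
    have "(\<alpha> ^ u) ^ t = 1 \<longleftrightarrow> (u * t) mod n = 0"
      using R.alpha_pow_eq_1 by (simp flip: power_mult add: dvd_eq_mod_eq_0)
    also have "\<dots> \<longleftrightarrow> T ((u * t) mod n) = T 0"
    proof
      assume "T ((u * t) mod n) = T 0"
      thus "(u * t) mod n = 0" by (rule inj_onD[OF Tinj]) (use npos in auto)
    qed simp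
    finally show ?thesis using T0 by simp
  qed
  have g1: "\<gamma>1 ^ t = 1 \<longleftrightarrow> r1 dvd t" for t
    using gam_one[OF u1(1), of t] Tmul[OF u1(1), of t] u1(2) by (simp add: \<gamma>1_def dvd_eq_mod_eq_0)
  have g2: "\<gamma>2 ^ t = 1 \<longleftrightarrow> r2 dvd t" for t
    using gam_one[OF u2(1), of t] Tmul[OF u2(1), of t] u2(2) by (simp add: \<gamma>2_def dvd_eq_mod_eq_0)
  define fam where "fam i = \<gamma>1 ^ fst i * \<gamma>2 ^ snd i" for i :: "nat \<times> nat"
  define \<phi> where "\<phi> i = ((u1 * fst i) mod n + (u2 * snd i) mod n) mod n" for i :: "nat \<times> nat"
  have phi: "\<phi> i < n" "T (\<phi> i) = i" "\<alpha> ^ \<phi> i = fam i" if "i \<in> {..<r1} \<times> {..<r2}" for i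
  proof -
    show "\<phi> i < n" using npos by (simp add: \<phi>_def)
    have "T (\<phi> i) = ((fst (T ((u1 * fst i) mod n)) + fst (T ((u2 * snd i) mod n))) mod r1,
                      (snd (T ((u1 * fst i) mod n)) + snd (T ((u2 * snd i) mod n))) mod r2)"
      unfolding \<phi>_def using T_hom npos by simp
    also have "\<dots> = i" using that Tmul[OF u1(1), of "fst i"] Tmul[OF u2(1), of "snd i"] u1(2) u2(2)
      by (cases i) simp
    finally show "T (\<phi> i) = i" .
    have "\<alpha> ^ \<phi> i = \<alpha> ^ (u1 * fst i + u2 * snd i)"
      unfolding \<phi>_def by (simp add: R.alpha_pow_mod mod_add_eq)
    thus "\<alpha> ^ \<phi> i = fam i" by (simp add: fam_def \<gamma>1_def \<gamma>2_def power_add power_mult)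
  qed
  define \<Gamma>0 where "\<Gamma>0 = {..<a} \<times> {..<m div a}"
  have indep0: "\<forall>i\<in>\<Gamma>0. g i = 0" if "\<forall>i\<in>\<Gamma>0. g i \<in> R.KK" "(\<Sum>i\<in>\<Gamma>0. g i * fam i) = 0" for g
    using R.indep_core[OF n_fact cop a_def g1 g2, of g] that unfolding \<Gamma>0_def fam_def by blast
  have fam_inj: "inj_on fam \<Gamma>0"
  proof (rule inj_onI, rule ccontr)
    fix x y assume xy: "x \<in> \<Gamma>0" "y \<in> \<Gamma>0" "fam x = fam y" "x \<noteq> y"
    define g where "g i = (if i = x then 1 else if i = y then -1 else (0::'b))" for i
    have "\<forall>i\<in>\<Gamma>0. g i \<in> R.KK" by (auto simp: g_def R.K_0 R.K_1 R.K_uminus)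
    moreover have "(\<Sum>i\<in>\<Gamma>0. g i * fam i) = 0"
    proof -
      have "(\<Sum>i\<in>\<Gamma>0. g i * fam i) = (\<Sum>i\<in>\<Gamma>0. (if i = x then fam x else 0) + (if i = y then - fam y else 0))"
        by (rule sum.cong) (use xy(4) in \<open>auto simp: g_def\<close>)
      also have "\<dots> = 0" using xy by (simp add: sum.distrib \<Gamma>0_def)
      finally show ?thesis .
    qed
    ultimately have "g x = 0" using indep0 xy(1) by blast
    thus False by (simp add: g_def)
  qed
  have cop1: "coprime r1 q"
  proof -
    have "r1 dvd q ^ m - 1" using n_fact n_def by (metis dvd_triv_left)
    thus ?thesis using dvd_qm_coprime R.q_ge2 m_pos by simp
  qed
  have apos: "a > 0" using a_def cop1 by simp
  have adm: "a dvd m"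
  proof -
    have "r1 dvd q ^ m - 1" using n_fact n_def by (metis dvd_triv_left)
    hence "[q ^ m = 1] (mod r1)" using R.q_ge2 by (simp add: cong_altdef_nat)
    thus ?thesis using ord_divides a_def by blast
  qed
  have mda: "a * (m div a) = m" using adm by simp
  have md_pos: "m div a > 0" using mda m_pos by (metis gr0I mult_0_right not_one_le_zero)
  have a_le: "a \<le> r1"
  proof (rule ccontr)
    assume "\<not> a \<le> r1"
    hence m1: "(r1, 0) \<in> \<Gamma>0" "(0, 0) \<in> \<Gamma>0" using md_pos apos by (auto simp: \<Gamma>0_def)
    have "fam (r1, 0) = fam (0, 0)" using g1[of r1] by (simp add: fam_def)
    from inj_onD[OF fam_inj this m1] show False using r1_gt by simp
  qed
  have md_le: "m div a \<le> r2"
  proof (rule ccontr)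
    assume "\<not> m div a \<le> r2"
    hence m1: "(0, r2) \<in> \<Gamma>0" "(0, 0) \<in> \<Gamma>0" using md_pos apos by (auto simp: \<Gamma>0_def)
    have "fam (0, r2) = fam (0, 0)" using g2[of r2] by (simp add: fam_def)
    from inj_onD[OF fam_inj this m1] show False using r2_gt by simp
  qed
  have Gam_eq: "\<Gamma> = \<Gamma>0"
  proof
    show "\<Gamma> \<subseteq> \<Gamma>0"
    proof
      fix i assume "i \<in> \<Gamma>"
      then obtain i1 i2 where i: "i = (i1, i2)" "i1 < a" "i2 * a < m" by (auto simp: \<Gamma>_def)
      have "i2 * a < (m div a) * a" using i(3) mda by (simp add: mult.commute)
      hence "i2 < m div a" by simp
      thus "i \<in> \<Gamma>0" using i by (simp add: \<Gamma>0_def)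
    qed
  next
    show "\<Gamma>0 \<subseteq> \<Gamma>"
    proof
      fix i assume "i \<in> \<Gamma>0"
      then obtain i1 i2 where i: "i = (i1, i2)" "i1 < a" "i2 < m div a" by (auto simp: \<Gamma>0_def)
      have "i2 * a < (m div a) * a" using i(3) apos by simp
      hence "i2 * a < m" using mda by (simp add: mult.commute)
      thus "i \<in> \<Gamma>" using i a_le md_le by (simp add: \<Gamma>_def)
    qed
  qed
  have Gam_sub: "\<Gamma> \<subseteq> {..<r1} \<times> {..<r2}" by (auto simp: \<Gamma>_def)
  define B where "B = {\<alpha> ^ i | i. i < n \<and> T i \<in> \<Gamma>}"
  have B_eq: "B = fam ` \<Gamma>0"
  proof
    show "B \<subseteq> fam ` \<Gamma>0"
    proof
      fix x assume "x \<in> B"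
      then obtain i where i: "x = \<alpha> ^ i" "i < n" "T i \<in> \<Gamma>" by (auto simp: B_def)
      have "\<phi> (T i) = i" using phi(1,2)[of "T i"] i Gam_sub inj_onD[OF Tinj] by blast
      hence "x = fam (T i)" using phi(3)[of "T i"] i Gam_sub by auto
      thus "x \<in> fam ` \<Gamma>0" using i(3) Gam_eq by blast
    qed
  next
    show "fam ` \<Gamma>0 \<subseteq> B"
    proof
      fix x assume "x \<in> fam ` \<Gamma>0"
      then obtain j where j: "j \<in> \<Gamma>" "x = fam j" using Gam_eq by blast
      hence "x = \<alpha> ^ \<phi> j" "\<phi> j < n" "T (\<phi> j) \<in> \<Gamma>" using phi[of j] Gam_sub by auto
      thus "x \<in> B" by (auto simp: B_def)
    qed
  qed
  have cardB: "card B = m"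
    using B_eq card_image[OF fam_inj] mda by (simp add: \<Gamma>0_def)
  have indepB: "\<forall>b\<in>B. g b = 0" if "\<forall>b\<in>B. g b \<in> R.KK" "(\<Sum>b\<in>B. g b * b) = 0" for g
  proof -
    have "\<forall>i\<in>\<Gamma>0. g (fam i) \<in> R.KK" using that(1) B_eq by auto
    moreover have "(\<Sum>i\<in>\<Gamma>0. g (fam i) * fam i) = 0"
      using that(2) B_eq by (simp add: sum.reindex[OF fam_inj])
    ultimately have "\<forall>i\<in>\<Gamma>0. g (fam i) = 0" using indep0[of "\<lambda>i. g (fam i)"] by blast
    thus ?thesis using B_eq by auto
  qed
  interpret BC: basisctx q m n p e \<alpha> B
    by unfold_locales (use cardB indepB in auto)
  have comp: "{\<alpha> ^ i | i. i < n \<and> T i \<notin> \<Gamma>} = UNIV - insert 0 B"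
  proof
    show "{\<alpha> ^ i | i. i < n \<and> T i \<notin> \<Gamma>} \<subseteq> UNIV - insert 0 B"
    proof
      fix x assume "x \<in> {\<alpha> ^ i | i. i < n \<and> T i \<notin> \<Gamma>}"
      then obtain i where i: "x = \<alpha> ^ i" "i < n" "T i \<notin> \<Gamma>" by blast
      have "x \<noteq> 0" using i gen(1) by simp
      moreover have "x \<notin> B"
      proof
        assume "x \<in> B"
        then obtain j where j: "x = \<alpha> ^ j" "j < n" "T j \<in> \<Gamma>" by (auto simp: B_def)
        hence "i = j" using i inj_onD[OF R.alpha_inj] by auto
        thus False using i j by simp
      qed
      ultimately show "x \<in> UNIV - insert 0 B" by simp
    qed
  next
    show "UNIV - insert 0 B \<subseteq> {\<alpha> ^ i | i. i < n \<and> T i \<notin> \<Gamma>}"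
    proof
      fix x assume x: "x \<in> UNIV - insert 0 B"
      hence "x \<in> (\<lambda>k. \<alpha> ^ k) ` {..<n}" using R.alpha_img by auto
      then obtain i where i: "i < n" "x = \<alpha> ^ i" by auto
      have "T i \<notin> \<Gamma>" using x i by (auto simp: B_def)
      thus "x \<in> {\<alpha> ^ i | i. i < n \<and> T i \<notin> \<Gamma>}" using i by blast
    qed
  qed
  show ?thesis using BC.info1 BC.info2 comp unfolding B_def by simp
qed


end
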